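(* $gr^{(2)}=GL_n(L)^{(2)}\cdot H_n^{(0)}$, i.e. a subspace $W\subset H_n$ belongs to $gr^{(2)}$ if and only if $W=g(t)H_n^{(0)}$ for some $g(t)\in GL_n(L)^{(2)}$.
   Context: Let $e_1,\dots,e_n$ be the standard basis of $\mathbb{C}^n$ and $H_n=\mathbb{C}^n((t))$ the space of formal Laurent series $\sum_jc_jt^j$, $c_j\in\mathbb{C}^n$, $c_j=0$ for $j\ll0$. For $1\le j\le n$, $k\in\mathbb{Z}$ put $v_{-n(k+1)+j-\frac12}:=e_jt^k$, and for $j\in\mathbb{Z}$ let $H_n^{(j)}$ be the space of (possibly infinite) sums $\sum_{m<j}b_mv_m$; in particular $H_n^{(0)}=\mathbb{C}^n[[t]]$. Let $Gr_0$ be the set of linear subspaces $W\subset H_n$ such that for all sufficiently negative $j$ one has $H_n^{(j)}\subset W$ and $\dim W/H_n^{(j)}=-j$, and $gr_0=\{W\in Gr_0: tW\subset W\}$. Define the skew-symmetric bilinear form on $H_n$ by $\langle u(t),v(t)\rangle=i\,\mathrm{Res}_t\sum_{a=1}^nu_a(t)v_a(-t)$, where $u_a,v_a$ are the components and $\mathrm{Res}_t\sum a_it^i=a_{-1}$. Put $Gr^{(2)}=\{W\in Gr_0:\langle u,v\rangle=0\ \forall u,v\in W\}$ and $gr^{(2)}=gr_0\cap Gr^{(2)}$. Let $L=\mathbb{C}[t,t^{-1}]$, $GL_n(L)$ the group of invertible $n\times n$ matrices over $L$ acting on $H_n$ by multiplication, and $GL_n(L)^{(2)}=\{A(t)\in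 GL_n(L): A(-t)=(A(t)^T)^{-1}\}$ the twisted loop group. *)

theory Defs
  imports Complex_Main
begin

text \<open>An element u of H_n = C^n((t)) is encoded as a function u :: nat => int => complex,
  where u a k is the coefficient of e_(a+1) t^k (components a < n; u a = 0 for a >= n),
  and only finitely many negative powers occur.\<close>

type_synonym hvec = "nat \<Rightarrow> int \<Rightarrow> complex"

definition in_H :: "nat \<Rightarrow> hvec \<Rightarrow> bool" where
  "in_H n u \<longleftrightarrow> (\<forall>a k. n \<le> a \<longrightarrow> u a k = 0) \<and> (\<exists>N. \<forall>a k. k < N \<longrightarrow> u a k = 0)"

text \<open>Cauchy product coefficient (finite sum whenever the product is defined, e.g. for
  Laurent series / Laurent polynomials).\<close>
definition conv :: "(int \<Rightarrow> complex) \<Rightarrow> (int \<Rightarrow> complex) \<Rightarrow> int \<Rightarrow> complex" where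
  "conv f g k = (\<Sum>p | f p \<noteq> 0 \<and> g (k - p) \<noteq> 0. f p * g (k - p))"

text \<open>The basis vector e_(a+1) t^k is v_m with m = -n(k+1) + (a+1) - 1/2; we record m + 1/2.\<close>
definition vidx :: "nat \<Rightarrow> nat \<Rightarrow> int \<Rightarrow> int" where
  "vidx n a k = - int n * (k + 1) + int a + 1"

text \<open>H_n^(J): sums of b_m v_m with m < J, i.e. m + 1/2 <= J.\<close>
definition Hsub :: "nat \<Rightarrow> int \<Rightarrow> hvec set" where
  "Hsub n J = {u. in_H n u \<and> (\<forall>a<n. \<forall>k. J < vidx n a k \<longrightarrow> u a k = 0)}"

definition lin_subspace :: "nat \<Rightarrow> hvec set \<Rightarrow> bool" where
  "lin_subspace n W \<longleftrightarrow> W \<subseteq> {u. in_H n u} \<and> (\<lambda>a k. 0) \<in> W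
     \<and> (\<forall>u\<in>W. \<forall>v\<in>W. (\<lambda>a k. u a k + v a k) \<in> W)
     \<and> (\<forall>c::complex. \<forall>u\<in>W. (\<lambda>a k. c * u a k) \<in> W)"

text \<open>dim (W / V) = d: there are d vectors in W forming a basis of W modulo V.\<close>
definition quot_dim :: "hvec set \<Rightarrow> hvec set \<Rightarrow> nat \<Rightarrow> bool" where
  "quot_dim W V d \<longleftrightarrow> (\<exists>f :: nat \<Rightarrow> hvec. (\<forall>i<d. f i \<in> W) \<and>
      (\<forall>w\<in>W. \<exists>!c :: nat \<Rightarrow> complex. (\<forall>i. d \<le> i \<longrightarrow> c i = 0) \<and>
          (\<lambda>a k. w a k - (\<Sum>i<d. c i * f i a k)) \<in> V))"

definition Gr0 :: "nat \<Rightarrow> hvec set set" where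
  "Gr0 n = {W. lin_subspace n W \<and>
     (\<exists>J0 \<le> 0. \<forall>J \<le> J0. Hsub n J \<subseteq> W \<and> quot_dim W (Hsub n J) (nat (- J)))}"

definition tmul :: "hvec \<Rightarrow> hvec" where
  "tmul u = (\<lambda>a k. u a (k - 1))"

definition gr0 :: "nat \<Rightarrow> hvec set set" where
  "gr0 n = {W \<in> Gr0 n. \<forall>u\<in>W. tmul u \<in> W}"

text \<open><u,v> = i Res_t sum_a u_a(t) v_a(-t).\<close>
definition bform :: "nat \<Rightarrow> hvec \<Rightarrow> hvec \<Rightarrow> complex" where
  "bform n u v = \<i> * (\<Sum>a<n. \<Sum>p | u a p \<noteq> 0 \<and> v a (-1 - p) \<noteq> 0.
      u a p * ((-1) powi (-1 - p) * v a (-1 - p)))"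

definition Gr2 :: "nat \<Rightarrow> hvec set set" where
  "Gr2 n = {W \<in> Gr0 n. \<forall>u\<in>W. \<forall>v\<in>W. bform n u v = 0}"

definition gr2 :: "nat \<Rightarrow> hvec set set" where
  "gr2 n = gr0 n \<inter> Gr2 n"

text \<open>n x n matrices over L = C[t,t^-1]: A a b k = coefficient of t^k in entry (a+1,b+1).\<close>
type_synonym lmat = "nat \<Rightarrow> nat \<Rightarrow> int \<Rightarrow> complex"

definition is_Lmat :: "nat \<Rightarrow> lmat \<Rightarrow> bool" where
  "is_Lmat n A \<longleftrightarrow> (\<forall>a b k. (n \<le> a \<or> n \<le> b) \<longrightarrow> A a b k = 0)
      \<and> (\<forall>a b. finite {k. A a b k \<noteq> 0})"

definition mat_mult :: "nat \<Rightarrow> lmat \<Rightarrow> lmat \<Rightarrow> lmat" where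
  "mat_mult n A B = (\<lambda>a b k. \<Sum>c<n. conv (A a c) (B c b) k)"

definition mat_one :: "nat \<Rightarrow> lmat" where
  "mat_one n = (\<lambda>a b k. if a < n \<and> a = b \<and> k = 0 then 1 else 0)"

definition mat_tr :: "lmat \<Rightarrow> lmat" where
  "mat_tr A = (\<lambda>a b k. A b a k)"

text \<open>A(-t).\<close>
definition mat_neg :: "lmat \<Rightarrow> lmat" where
  "mat_neg A = (\<lambda>a b k. (-1) powi k * A a b k)"

definition GL :: "nat \<Rightarrow> lmat set" where
  "GL n = {A. is_Lmat n A \<and> (\<exists>B. is_Lmat n B \<and> mat_mult n A B = mat_one n \<and> mat_mult n B A = mat_one n)}"

text \<open>Twisted loop group: A(-t) = (A(t)^T)^-1.\<close>
definition GL2 :: "nat \<Rightarrow> lmat set" where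
  "GL2 n = {A \<in> GL n. mat_mult n (mat_neg A) (mat_tr A) = mat_one n
                    \<and> mat_mult n (mat_tr A) (mat_neg A) = mat_one n}"

definition act :: "nat \<Rightarrow> lmat \<Rightarrow> hvec \<Rightarrow> hvec" where
  "act n A u = (\<lambda>a k. \<Sum>c<n. conv (A a c) (u c) k)"

end

theory Submission
  imports Defs "HOL-Computational_Algebra.Formal_Laurent_Series" "HOL-Library.Function_Algebras"
begin
unbundle fps_syntax

definition bb :: "(int \<Rightarrow> complex) \<Rightarrow> bool" where
  "bb f \<longleftrightarrow> (\<exists>N. \<forall>k<N. f k = 0)"

lemma bb_Abs: assumes "bb f" shows "Abs_fls f $$ k = f k"
proof -
  from assms obtain N where N: "\<forall>k<N. f k = 0" unfolding bb_def by blast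
  have "\<exists>m. \<forall>j>m. f (- int j) = 0"
    by (rule exI[of _ "nat (- N)"]) (use N in auto)
  then show ?thesis by (rule nth_Abs_fls_ex_nat_lower_bound)
qed

lemma fls_mult_nth_bounds:
  fixes f g :: "'a::comm_ring_1 fls"
  assumes A: "\<And>k. k < A \<Longrightarrow> f $$ k = 0" and B: "\<And>k. k < B \<Longrightarrow> g $$ k = 0"
  shows "(f * g) $$ n = (\<Sum>i\<in>{A..n-B}. f $$ i * g $$ (n - i))"
proof (cases "f = 0 \<or> g = 0")
  case True
  then show ?thesis by auto
next
  case False
  then have f0: "f \<noteq> 0" and g0: "g \<noteq> 0" by auto
  have dA: "A \<le> fls_subdegree f" using fls_subdegree_geI[OF f0] A by blast
  have dB: "B \<le> fls_subdegree g" using fls_subdegree_geI[OF g0] B by blast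
  have "(f * g) $$ n = (\<Sum>i=fls_subdegree f..n - fls_subdegree g. f $$ i * g $$ (n - i))"
    by (rule fls_times_nth(2))
  also have "\<dots> = (\<Sum>i\<in>{A..n-B}. f $$ i * g $$ (n - i))"
  proof (rule sum.mono_neutral_left)
    show "finite {A..n - B}" by simp
    show "{fls_subdegree f..n - fls_subdegree g} \<subseteq> {A..n - B}" using dA dB by auto
    show "\<forall>i\<in>{A..n - B} - {fls_subdegree f..n - fls_subdegree g}. f $$ i * g $$ (n - i) = 0"
      by auto
  qed
  finally show ?thesis .
qed

lemma conv_bounds:
  assumes A: "\<And>k. k < A \<Longrightarrow> f k = 0" and B: "\<And>k. k < B \<Longrightarrow> g k = 0"
  shows "conv f g n = (\<Sum>i\<in>{A..n-B}. f i * g (n - i))"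
  unfolding conv_def
proof (rule sum.mono_neutral_left)
  show "finite {A..n - B}" by simp
  show "{p. f p \<noteq> 0 \<and> g (n - p) \<noteq> 0} \<subseteq> {A..n - B}"
    using A B by (auto simp: not_less[symmetric])
  show "\<forall>i\<in>{A..n - B} - {p. f p \<noteq> 0 \<and> g (n - p) \<noteq> 0}. f i * g (n - i) = 0" by auto
qed

lemma conv_fls:
  assumes "bb f" "bb g"
  shows "conv f g n = (Abs_fls f * Abs_fls g) $$ n"
proof -
  from assms obtain A B where A: "\<forall>k<A. f k = 0" and B: "\<forall>k<B. g k = 0"
    unfolding bb_def by blast
  show ?thesis
    using conv_bounds[of A f B g n] fls_mult_nth_bounds[of A "Abs_fls f" B "Abs_fls g" n]
      A B bb_Abs[OF assms(1)] bb_Abs[OF assms(2)] by simp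
qed

lemma conv_zero_below:
  assumes A: "\<And>k. k < A \<Longrightarrow> f k = 0" and B: "\<And>k. k < B \<Longrightarrow> g k = 0" and "n < A + B"
  shows "conv f g n = 0"
proof -
  have "conv f g n = (\<Sum>i\<in>{A..n-B}. f i * g (n - i))" by (rule conv_bounds[OF A B])
  then show ?thesis using assms(3) by simp
qed

lemma fls_sum_nth: "finite S \<Longrightarrow> (\<Sum>c\<in>S. f c) $$ k = (\<Sum>c\<in>S. f c $$ k)"
  by (induction S rule: finite_induct) auto

unbundle fps_syntax

definition Vl :: "hvec \<Rightarrow> nat \<Rightarrow> complex fls" where "Vl u a = Abs_fls (u a)"
definition Ml :: "lmat \<Rightarrow> nat \<Rightarrow> nat \<Rightarrow> complex fls" where "Ml A a b = Abs_fls (A a b)"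

definition sg :: "complex fls \<Rightarrow> complex fls" where
  "sg f = Abs_fls (\<lambda>k. (-1) powi k * f $$ k)"

lemma sg_nth [simp]: "sg f $$ k = (-1) powi k * f $$ k"
proof -
  have "bb (\<lambda>k. (-1) powi k * f $$ k)"
    unfolding bb_def by (rule exI[of _ "fls_subdegree f"]) auto
  then show ?thesis unfolding sg_def by (rule bb_Abs)
qed

lemma sg_mult: "sg (f * g) = sg f * sg g"
proof (rule fls_eqI)
  fix n
  have A: "\<And>k. k < fls_subdegree f \<Longrightarrow> sg f $$ k = 0" by simp
  have B: "\<And>k. k < fls_subdegree g \<Longrightarrow> sg g $$ k = 0" by simp
  have "(sg f * sg g) $$ n = (\<Sum>i\<in>{fls_subdegree f..n-fls_subdegree g}. sg f $$ i * sg g $$ (n - i))"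
    by (rule fls_mult_nth_bounds[OF A B])
  also have "\<dots> = (\<Sum>i\<in>{fls_subdegree f..n-fls_subdegree g}. (-1) powi n * (f $$ i * g $$ (n - i)))"
  proof (rule sum.cong, simp)
    fix i
    have "(-1::complex) powi n = (-1) powi i * (-1) powi (n - i)"
      using power_int_add[of "-1::complex" i "n - i"] by simp
    then show "sg f $$ i * sg g $$ (n - i) = (-1) powi n * (f $$ i * g $$ (n - i))" by simp
  qed
  also have "\<dots> = (-1) powi n * (f * g) $$ n"
    by (simp add: sum_distrib_left fls_mult_nth_bounds[of "fls_subdegree f" f "fls_subdegree g" g])
  finally show "sg (f * g) $$ n = (sg f * sg g) $$ n" by simp
qed

lemma sg_add: "sg (f + g) = sg f + sg g"
  by (rule fls_eqI) (simp add: algebra_simps)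
lemma sg_diff: "sg (f - g) = sg f - sg g"
  by (rule fls_eqI) (simp add: algebra_simps)
lemma sg_0 [simp]: "sg 0 = 0"
  by (rule fls_eqI) simp
lemma sg_1 [simp]: "sg 1 = 1"
  by (rule fls_eqI) simp
lemma sg_const [simp]: "sg (fls_const c) = fls_const c"
  by (rule fls_eqI) simp
lemma sg_sg [simp]: "sg (sg f) = f"
  by (rule fls_eqI) (simp add: mult.assoc[symmetric])
lemma sg_sum: "finite S \<Longrightarrow> sg (\<Sum>x\<in>S. f x) = (\<Sum>x\<in>S. sg (f x))"
  by (induction S rule: finite_induct) (auto simp: sg_add)
lemma sg_X: "sg fls_X = - fls_X"
  by (rule fls_eqI) simp
lemma sg_X_inv: "sg fls_X_inv = - fls_X_inv"
  by (rule fls_eqI) simp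
lemma sg_eq_iff [simp]: "sg f = sg g \<longleftrightarrow> f = g"
  by (metis sg_sg)

lemma in_H_bb: "in_H n u \<Longrightarrow> bb (u a)"
  unfolding in_H_def bb_def by blast

lemma Vl_nth: "in_H n u \<Longrightarrow> Vl u a $$ k = u a k"
  unfolding Vl_def using bb_Abs in_H_bb by blast

lemma Vl_inj: assumes "in_H n u" "in_H n v" "Vl u = Vl v" shows "u = v"
proof (intro ext)
  fix a k
  have "Vl u a $$ k = Vl v a $$ k" using assms(3) by simp
  then show "u a k = v a k" using Vl_nth assms(1,2) by metis
qed

lemma Vl_high: assumes "in_H n u" "n \<le> a" shows "Vl u a = 0"
proof (rule fls_eqI)
  fix k show "Vl u a $$ k = 0 $$ k" using Vl_nth[OF assms(1)] assms unfolding in_H_def by simp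
qed

lemma Lmat_bounds:
  assumes "is_Lmat n A"
  shows "\<exists>L U. \<forall>a b k. A a b k \<noteq> 0 \<longrightarrow> L \<le> k \<and> k \<le> U"
proof -
  define S where "S = (\<Union>a<n. \<Union>b<n. {k. A a b k \<noteq> 0})"
  have fS: "finite S" unfolding S_def using assms unfolding is_Lmat_def by auto
  have inS: "A a b k \<noteq> 0 \<Longrightarrow> k \<in> S" for a b k
  proof -
    assume h: "A a b k \<noteq> 0"
    then have "a < n" "b < n" using assms unfolding is_Lmat_def by (meson not_le)+
    then show "k \<in> S" using h unfolding S_def by blast
  qed
  show ?thesis
  proof (intro exI allI impI)
    fix a b k assume "A a b k \<noteq> 0"
    then have "k \<in> S" by (rule inS)
    then show "Min (insert 0 S) \<le> k \<and> k \<le> Max (insert 0 S)" using fS by auto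
  qed
qed

lemma Lmat_bb: "is_Lmat n A \<Longrightarrow> bb (A a b)"
  using Lmat_bounds unfolding bb_def by (metis not_le)

lemma Ml_nth: "is_Lmat n A \<Longrightarrow> Ml A a b $$ k = A a b k"
  unfolding Ml_def using bb_Abs Lmat_bb by blast

lemma Ml_high: "is_Lmat n A \<Longrightarrow> n \<le> a \<or> n \<le> b \<Longrightarrow> Ml A a b = 0"
  by (rule fls_eqI) (auto simp: Ml_nth is_Lmat_def)

lemma Lmat_eqI:
  assumes "is_Lmat n A" "is_Lmat n B" "\<And>a b. a < n \<Longrightarrow> b < n \<Longrightarrow> Ml A a b = Ml B a b"
  shows "A = B"
proof (intro ext)
  fix a b k
  show "A a b k = B a b k"
  proof (cases "a < n \<and> b < n")
    case True
    then have "Ml A a b $$ k = Ml B a b $$ k" using assms(3) by simp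
    then show ?thesis using Ml_nth assms(1,2) by metis
  next
    case False
    then show ?thesis using assms(1,2) unfolding is_Lmat_def by (auto simp: not_less)
  qed
qed

lemma in_H_lower: "in_H n u \<Longrightarrow> \<exists>N. \<forall>a k. k < N \<longrightarrow> u a k = 0"
  unfolding in_H_def by blast

lemma in_H_act:
  assumes A: "is_Lmat n A" and u: "in_H n u"
  shows "in_H n (act n A u)"
proof -
  obtain L U where LU: "\<forall>a b k. A a b k \<noteq> 0 \<longrightarrow> L \<le> k \<and> k \<le> U" using Lmat_bounds[OF A] by blast
  obtain N where N: "\<forall>a k. k < N \<longrightarrow> u a k = 0" using in_H_lower[OF u] by blast
  have 1: "act n A u a k = 0" if "n \<le> a" for a k
    using A that unfolding act_def is_Lmat_def conv_def by simp
  have 2: "act n A u a k = 0" if "k < L + N" for a k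
    unfolding act_def
  proof (rule sum.neutral, intro ballI)
    fix c
    show "conv (A a c) (u c) k = 0"
      by (rule conv_zero_below[of L _ N]) (use LU N that in \<open>auto simp: not_le[symmetric]\<close>)
  qed
  show ?thesis unfolding in_H_def using 1 2 by blast
qed

lemma Vl_act:
  assumes A: "is_Lmat n A" and u: "in_H n u"
  shows "Vl (act n A u) a = (\<Sum>c<n. Ml A a c * Vl u c)"
proof (rule fls_eqI)
  fix k
  have "Vl (act n A u) a $$ k = (\<Sum>c<n. conv (A a c) (u c) k)"
    using Vl_nth[OF in_H_act[OF A u]] unfolding act_def by simp
  also have "\<dots> = (\<Sum>c<n. (Ml A a c * Vl u c) $$ k)"
    using conv_fls Lmat_bb[OF A] in_H_bb[OF u] unfolding Ml_def Vl_def by simp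
  also have "\<dots> = (\<Sum>c<n. Ml A a c * Vl u c) $$ k" by (simp add: fls_sum_nth)
  finally show "Vl (act n A u) a $$ k = (\<Sum>c<n. Ml A a c * Vl u c) $$ k" .
qed

lemma Lmat_mult:
  assumes A: "is_Lmat n A" and B: "is_Lmat n B"
  shows "is_Lmat n (mat_mult n A B)"
proof -
  obtain L U where LU: "\<forall>a b k. A a b k \<noteq> 0 \<longrightarrow> L \<le> k \<and> k \<le> U" using Lmat_bounds[OF A] by blast
  obtain L' U' where LU': "\<forall>a b k. B a b k \<noteq> 0 \<longrightarrow> L' \<le> k \<and> k \<le> U'" using Lmat_bounds[OF B] by blast
  have z: "mat_mult n A B a b k = 0" if "k < L + L' \<or> k > U + U'" for a b k
    unfolding mat_mult_def
  proof (rule sum.neutral, intro ballI)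
    fix c
    have "conv (A a c) (B c b) k = (\<Sum>i\<in>{L..k-L'}. A a c i * B c b (k - i))"
      by (rule conv_bounds) (metis LU not_le, metis LU' not_le)
    also have "\<dots> = 0"
    proof (rule sum.neutral, intro ballI)
      fix i assume "i \<in> {L..k-L'}"
      then show "A a c i * B c b (k - i) = 0" using LU LU' that by fastforce
    qed
    finally show "conv (A a c) (B c b) k = 0" .
  qed
  have fin: "finite {k. mat_mult n A B a b k \<noteq> 0}" for a b
    by (rule finite_subset[of _ "{L+L'..U+U'}"]) (use z in \<open>force\<close>)+
  have hi: "mat_mult n A B a b k = 0" if "n \<le> a \<or> n \<le> b" for a b k
    using A B that unfolding mat_mult_def is_Lmat_def conv_def by auto
  show ?thesis unfolding is_Lmat_def using fin hi by blast
qed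

lemma Ml_mult:
  assumes A: "is_Lmat n A" and B: "is_Lmat n B"
  shows "Ml (mat_mult n A B) a b = (\<Sum>c<n. Ml A a c * Ml B c b)"
proof (rule fls_eqI)
  fix k
  have "Ml (mat_mult n A B) a b $$ k = (\<Sum>c<n. conv (A a c) (B c b) k)"
    using Ml_nth[OF Lmat_mult[OF A B]] unfolding mat_mult_def by simp
  also have "\<dots> = (\<Sum>c<n. (Ml A a c * Ml B c b) $$ k)"
    using conv_fls Lmat_bb[OF A] Lmat_bb[OF B] unfolding Ml_def by simp
  also have "\<dots> = (\<Sum>c<n. Ml A a c * Ml B c b) $$ k" by (simp add: fls_sum_nth)
  finally show "Ml (mat_mult n A B) a b $$ k = (\<Sum>c<n. Ml A a c * Ml B c b) $$ k" .
qed

lemma Lmat_one: "is_Lmat n (mat_one n)"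
proof -
  have "finite {k. mat_one n a b k \<noteq> 0}" for a b
    by (rule finite_subset[of _ "{0}"]) (auto simp: mat_one_def)
  then show ?thesis unfolding is_Lmat_def mat_one_def by auto
qed

lemma Ml_one: "Ml (mat_one n) a b = (if a < n \<and> a = b then 1 else 0)"
proof (rule fls_eqI)
  fix k show "Ml (mat_one n) a b $$ k = (if a < n \<and> a = b then 1 else 0) $$ k"
    using Ml_nth[OF Lmat_one, of n a b k] unfolding mat_one_def by auto
qed

lemma Lmat_tr: "is_Lmat n A \<Longrightarrow> is_Lmat n (mat_tr A)"
  unfolding is_Lmat_def mat_tr_def by auto

lemma Ml_tr: assumes A: "is_Lmat n A" shows "Ml (mat_tr A) a b = Ml A b a"
proof (rule fls_eqI)
  fix k show "Ml (mat_tr A) a b $$ k = Ml A b a $$ k"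
    using Ml_nth[OF Lmat_tr[OF A], of a b k] Ml_nth[OF A, of b a k] by (simp add: mat_tr_def)
qed

lemma Lmat_neg: "is_Lmat n A \<Longrightarrow> is_Lmat n (mat_neg A)"
  unfolding is_Lmat_def mat_neg_def by auto

lemma Ml_neg: assumes A: "is_Lmat n A" shows "Ml (mat_neg A) a b = sg (Ml A a b)"
proof (rule fls_eqI)
  fix k show "Ml (mat_neg A) a b $$ k = sg (Ml A a b) $$ k"
    using Ml_nth[OF Lmat_neg[OF A], of a b k] Ml_nth[OF A, of a b k] by (simp add: mat_neg_def)
qed

lemma act_mult:
  assumes A: "is_Lmat n A" and B: "is_Lmat n B" and u: "in_H n u"
  shows "act n (mat_mult n A B) u = act n A (act n B u)"
proof (rule Vl_inj[of n])
  show "in_H n (act n (mat_mult n A B) u)" by (rule in_H_act[OF Lmat_mult[OF A B] u])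
  show "in_H n (act n A (act n B u))" by (rule in_H_act[OF A in_H_act[OF B u]])
  show "Vl (act n (mat_mult n A B) u) = Vl (act n A (act n B u))"
  proof
    fix a
    have "Vl (act n (mat_mult n A B) u) a = (\<Sum>c<n. (\<Sum>d<n. Ml A a d * Ml B d c) * Vl u c)"
      by (simp add: Vl_act[OF Lmat_mult[OF A B] u] Ml_mult[OF A B])
    also have "\<dots> = (\<Sum>d<n. Ml A a d * (\<Sum>c<n. Ml B d c * Vl u c))"
    proof -
      have "(\<Sum>c<n. (\<Sum>d<n. Ml A a d * Ml B d c) * Vl u c) = (\<Sum>c<n. \<Sum>d<n. Ml A a d * (Ml B d c * Vl u c))"
        by (simp add: sum_distrib_right mult.assoc)
      also have "\<dots> = (\<Sum>d<n. \<Sum>c<n. Ml A a d * (Ml B d c * Vl u c))"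
        by (rule sum.swap)
      also have "\<dots> = (\<Sum>d<n. Ml A a d * (\<Sum>c<n. Ml B d c * Vl u c))"
        by (simp add: sum_distrib_left)
      finally show ?thesis .
    qed
    also have "\<dots> = Vl (act n A (act n B u)) a"
      by (simp add: Vl_act[OF A in_H_act[OF B u]] Vl_act[OF B u])
    finally show "Vl (act n (mat_mult n A B) u) a = Vl (act n A (act n B u)) a" .
  qed
qed

lemma act_one:
  assumes u: "in_H n u"
  shows "act n (mat_one n) u = u"
proof (rule Vl_inj[of n])
  show "in_H n (act n (mat_one n) u)" by (rule in_H_act[OF Lmat_one u])
  show "in_H n u" by fact
  show "Vl (act n (mat_one n) u) = Vl u"
  proof
    fix a
    have "Vl (act n (mat_one n) u) a = (\<Sum>c<n. Ml (mat_one n) a c * Vl u c)"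
      by (rule Vl_act[OF Lmat_one u])
    also have "\<dots> = (\<Sum>c<n. (if c = a then Vl u c else 0))"
      by (rule sum.cong) (auto simp: Ml_one)
    also have "\<dots> = Vl u a" using Vl_high[OF u, of a] by (auto simp: sum.delta')
    finally show "Vl (act n (mat_one n) u) a = Vl u a" .
  qed
qed

unbundle fps_syntax

definition PS :: "nat \<Rightarrow> hvec \<Rightarrow> hvec \<Rightarrow> complex fls" where
  "PS n u v = (\<Sum>a<n. Vl u a * sg (Vl v a))"

lemma powi_m1_nz [simp]: "(-1::complex) powi k \<noteq> 0"
  by (simp add: power_int_0_left_if)

lemma bform_fls:
  assumes u: "in_H n u" and v: "in_H n v"
  shows "bform n u v = \<i> * (PS n u v $$ (-1))"
proof -
  have "(\<Sum>p | u a p \<noteq> 0 \<and> v a (-1 - p) \<noteq> 0. u a p * ((-1) powi (-1 - p) * v a (-1 - p)))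
        = (Vl u a * sg (Vl v a)) $$ (-1)" for a
  proof -
    define w where "w = (\<lambda>k. (-1) powi k * v a k)"
    have bw: "bb w" using in_H_bb[OF v, of a] unfolding bb_def w_def by auto
    have "{p. u a p \<noteq> 0 \<and> v a (-1 - p) \<noteq> 0} = {p. u a p \<noteq> 0 \<and> w (-1 - p) \<noteq> 0}"
      unfolding w_def by auto
    then have "(\<Sum>p | u a p \<noteq> 0 \<and> v a (-1 - p) \<noteq> 0. u a p * ((-1) powi (-1 - p) * v a (-1 - p)))
        = conv (u a) w (-1)" unfolding conv_def w_def by simp
    also have "\<dots> = (Abs_fls (u a) * Abs_fls w) $$ (-1)"
      by (rule conv_fls[OF in_H_bb[OF u] bw])
    also have "Abs_fls w = sg (Vl v a)"
    proof (rule fls_eqI)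
      fix k show "Abs_fls w $$ k = sg (Vl v a) $$ k"
        using bb_Abs[OF bw, of k] Vl_nth[OF v, of a k] by (simp add: w_def)
    qed
    finally show ?thesis unfolding Vl_def by simp
  qed
  then have "bform n u v = \<i> * (\<Sum>a<n. (Vl u a * sg (Vl v a)) $$ (-1))"
    unfolding bform_def by simp
  also have "(\<Sum>a<n. (Vl u a * sg (Vl v a)) $$ (-1)) = PS n u v $$ (-1)"
    unfolding PS_def by (rule fls_sum_nth[symmetric]) simp
  finally show ?thesis .
qed

lemma sg_nth_m1: "sg f $$ (-1) = - (f $$ (-1))"
  by simp

lemma PS_swap: "PS n v u = sg (PS n u v)"
  unfolding PS_def by (simp add: sg_sum sg_mult mult.commute)

lemma bform_skew:
  assumes u: "in_H n u" and v: "in_H n v"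
  shows "bform n v u = - bform n u v"
  using bform_fls[OF u v] bform_fls[OF v u] PS_swap[of n v u] by simp

lemma bform_self:
  assumes u: "in_H n u"
  shows "bform n u u = 0"
  using bform_skew[OF u u] by simp

lemma in_H_add: assumes "in_H n u" "in_H n v" shows "in_H n (\<lambda>a k. u a k + v a k)"
proof -
  obtain N1 where 1: "\<forall>a k. k < N1 \<longrightarrow> u a k = 0" using assms(1) unfolding in_H_def by blast
  obtain N2 where 2: "\<forall>a k. k < N2 \<longrightarrow> v a k = 0" using assms(2) unfolding in_H_def by blast
  have "\<forall>a k. k < min N1 N2 \<longrightarrow> u a k + v a k = 0" using 1 2 by simp
  then have "\<exists>N. \<forall>a k. k < N \<longrightarrow> u a k + v a k = 0" by blast
  then show ?thesis using assms unfolding in_H_def by auto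
qed
lemma in_H_sc: "in_H n u \<Longrightarrow> in_H n (\<lambda>a k. c * u a k)"
  unfolding in_H_def by auto
lemma in_H_zero: "in_H n (\<lambda>a k. 0)"
  unfolding in_H_def by auto

lemma Vl_add: assumes "in_H n u" "in_H n v" shows "Vl (\<lambda>a k. u a k + v a k) a = Vl u a + Vl v a"
proof (rule fls_eqI)
  fix k show "Vl (\<lambda>a k. u a k + v a k) a $$ k = (Vl u a + Vl v a) $$ k"
    using Vl_nth[OF in_H_add[OF assms], of a k] Vl_nth[OF assms(1)] Vl_nth[OF assms(2)] by simp
qed
lemma Vl_sc: assumes "in_H n u" shows "Vl (\<lambda>a k. c * u a k) a = fls_const c * Vl u a"
proof (rule fls_eqI)
  fix k show "Vl (\<lambda>a k. c * u a k) a $$ k = (fls_const c * Vl u a) $$ k"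
    using Vl_nth[OF in_H_sc[OF assms, of c], of a k] Vl_nth[OF assms] by simp
qed
lemma Vl_zero: "Vl (\<lambda>a k. 0) a = 0"
  by (rule fls_eqI) (simp add: Vl_nth[OF in_H_zero])

lemma bform_add1:
  assumes "in_H n u" "in_H n v" "in_H n w"
  shows "bform n (\<lambda>a k. u a k + v a k) w = bform n u w + bform n v w"
proof -
  have "PS n (\<lambda>a k. u a k + v a k) w = PS n u w + PS n v w"
    unfolding PS_def using assms by (simp add: Vl_add distrib_right sum.distrib)
  then show ?thesis using assms by (simp add: bform_fls in_H_add distrib_left)
qed

lemma bform_sc1:
  assumes "in_H n u" "in_H n w"
  shows "bform n (\<lambda>a k. c * u a k) w = c * bform n u w"
proof -
  have "PS n (\<lambda>a k. c * u a k) w = fls_const c * PS n u w"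
    unfolding PS_def using assms by (simp add: Vl_sc sum_distrib_left mult.assoc)
  then show ?thesis using assms by (simp add: bform_fls in_H_sc)
qed

lemma bform_add2:
  assumes "in_H n u" "in_H n v" "in_H n w"
  shows "bform n w (\<lambda>a k. u a k + v a k) = bform n w u + bform n w v"
proof -
  have "bform n w (\<lambda>a k. u a k + v a k) = - bform n (\<lambda>a k. u a k + v a k) w"
    using bform_skew[OF assms(3) in_H_add[OF assms(1,2)]] by simp
  also have "\<dots> = - (bform n u w + bform n v w)" using bform_add1[OF assms] by simp
  also have "\<dots> = bform n w u + bform n w v"
    using bform_skew[OF assms(3) assms(1)] bform_skew[OF assms(3) assms(2)] by simp
  finally show ?thesis .
qed

lemma bform_sc2:
  assumes "in_H n u" "in_H n w"
  shows "bform n w (\<lambda>a k. c * u a k) = c * bform n w u"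
proof -
  have "bform n w (\<lambda>a k. c * u a k) = - bform n (\<lambda>a k. c * u a k) w"
    using bform_skew[OF assms(2) in_H_sc[OF assms(1)]] by simp
  also have "\<dots> = - (c * bform n u w)" using bform_sc1[OF assms] by simp
  also have "\<dots> = c * bform n w u"
    using bform_skew[OF assms(2) assms(1)] by simp
  finally show ?thesis .
qed

lemma act_add:
  assumes A: "is_Lmat n A" and u: "in_H n u" and v: "in_H n v"
  shows "act n A (\<lambda>a k. u a k + v a k) = (\<lambda>a k. act n A u a k + act n A v a k)"
proof (rule Vl_inj[of n])
  show "in_H n (act n A (\<lambda>a k. u a k + v a k))" by (rule in_H_act[OF A in_H_add[OF u v]])
  show "in_H n (\<lambda>a k. act n A u a k + act n A v a k)"
    by (rule in_H_add[OF in_H_act[OF A u] in_H_act[OF A v]])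
  show "Vl (act n A (\<lambda>a k. u a k + v a k)) = Vl (\<lambda>a k. act n A u a k + act n A v a k)"
  proof
    fix a
    show "Vl (act n A (\<lambda>a k. u a k + v a k)) a = Vl (\<lambda>a k. act n A u a k + act n A v a k) a"
      by (simp add: Vl_act[OF A in_H_add[OF u v]] Vl_add[OF in_H_act[OF A u] in_H_act[OF A v]]
          Vl_act[OF A u] Vl_act[OF A v] Vl_add[OF u v] distrib_left sum.distrib)
  qed
qed

lemma act_sc:
  assumes A: "is_Lmat n A" and u: "in_H n u"
  shows "act n A (\<lambda>a k. c * u a k) = (\<lambda>a k. c * act n A u a k)"
proof (rule Vl_inj[of n])
  show "in_H n (act n A (\<lambda>a k. c * u a k))" by (rule in_H_act[OF A in_H_sc[OF u]])
  show "in_H n (\<lambda>a k. c * act n A u a k)" by (rule in_H_sc[OF in_H_act[OF A u]])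
  show "Vl (act n A (\<lambda>a k. c * u a k)) = Vl (\<lambda>a k. c * act n A u a k)"
  proof
    fix a
    show "Vl (act n A (\<lambda>a k. c * u a k)) a = Vl (\<lambda>a k. c * act n A u a k) a"
      by (simp add: Vl_act[OF A in_H_sc[OF u]] Vl_sc[OF in_H_act[OF A u]]
          Vl_act[OF A u] Vl_sc[OF u] sum_distrib_left mult.left_commute)
  qed
qed

lemma act_zero:
  assumes A: "is_Lmat n A"
  shows "act n A (\<lambda>a k. 0) = (\<lambda>a k. 0)"
  unfolding act_def conv_def by simp

definition gl2c :: "nat \<Rightarrow> lmat \<Rightarrow> bool" where
  "gl2c n A \<longleftrightarrow> is_Lmat n A
    \<and> (\<forall>a<n. \<forall>b<n. (\<Sum>c<n. sg (Ml A a c) * Ml A b c) = (if a = b then 1 else 0))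
    \<and> (\<forall>a<n. \<forall>b<n. (\<Sum>c<n. Ml A c a * sg (Ml A c b)) = (if a = b then 1 else 0))"

lemma mat_eq_one_iff:
  assumes "is_Lmat n P"
  shows "P = mat_one n \<longleftrightarrow> (\<forall>a<n. \<forall>b<n. Ml P a b = (if a = b then 1 else 0))"
  using Lmat_eqI[OF assms Lmat_one] Ml_one by auto

lemma GL2_iff: "A \<in> GL2 n \<longleftrightarrow> gl2c n A"
proof
  assume "A \<in> GL2 n"
  then have A: "is_Lmat n A" and e1: "mat_mult n (mat_neg A) (mat_tr A) = mat_one n"
    and e2: "mat_mult n (mat_tr A) (mat_neg A) = mat_one n"
    unfolding GL2_def GL_def by auto
  have L1: "is_Lmat n (mat_mult n (mat_neg A) (mat_tr A))" by (rule Lmat_mult[OF Lmat_neg[OF A] Lmat_tr[OF A]])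
  have L2: "is_Lmat n (mat_mult n (mat_tr A) (mat_neg A))" by (rule Lmat_mult[OF Lmat_tr[OF A] Lmat_neg[OF A]])
  show "gl2c n A" unfolding gl2c_def
  proof (intro conjI A allI impI)
    fix a b assume "a < n" "b < n"
    then show "(\<Sum>c<n. sg (Ml A a c) * Ml A b c) = (if a = b then 1 else 0)"
      using e1 mat_eq_one_iff[OF L1]
      by (simp add: Ml_mult[OF Lmat_neg[OF A] Lmat_tr[OF A]] Ml_neg[OF A] Ml_tr[OF A])
  next
    fix a b assume "a < n" "b < n"
    then show "(\<Sum>c<n. Ml A c a * sg (Ml A c b)) = (if a = b then 1 else 0)"
      using e2 mat_eq_one_iff[OF L2]
      by (simp add: Ml_mult[OF Lmat_tr[OF A] Lmat_neg[OF A]] Ml_neg[OF A] Ml_tr[OF A])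
  qed
next
  assume g: "gl2c n A"
  then have A: "is_Lmat n A" unfolding gl2c_def by simp
  define B where "B = mat_neg (mat_tr A)"
  have B: "is_Lmat n B" unfolding B_def by (rule Lmat_neg[OF Lmat_tr[OF A]])
  have MlB: "Ml B a b = sg (Ml A b a)" for a b
    unfolding B_def by (simp add: Ml_neg[OF Lmat_tr[OF A]] Ml_tr[OF A])
  have L1: "is_Lmat n (mat_mult n (mat_neg A) (mat_tr A))" by (rule Lmat_mult[OF Lmat_neg[OF A] Lmat_tr[OF A]])
  have L2: "is_Lmat n (mat_mult n (mat_tr A) (mat_neg A))" by (rule Lmat_mult[OF Lmat_tr[OF A] Lmat_neg[OF A]])
  have e1: "mat_mult n (mat_neg A) (mat_tr A) = mat_one n"
    using g unfolding mat_eq_one_iff[OF L1] gl2c_def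
    by (simp add: Ml_mult[OF Lmat_neg[OF A] Lmat_tr[OF A]] Ml_neg[OF A] Ml_tr[OF A])
  have e2: "mat_mult n (mat_tr A) (mat_neg A) = mat_one n"
    using g unfolding mat_eq_one_iff[OF L2] gl2c_def
    by (simp add: Ml_mult[OF Lmat_tr[OF A] Lmat_neg[OF A]] Ml_neg[OF A] Ml_tr[OF A])
  have e3: "mat_mult n A B = mat_one n"
    unfolding mat_eq_one_iff[OF Lmat_mult[OF A B]]
  proof (intro allI impI)
    fix a b assume ab: "a < n" "b < n"
    have "Ml (mat_mult n A B) a b = sg (\<Sum>c<n. sg (Ml A a c) * Ml A b c)"
      by (simp add: Ml_mult[OF A B] MlB sg_sum sg_mult)
    then show "Ml (mat_mult n A B) a b = (if a = b then 1 else 0)" using g ab unfolding gl2c_def by simp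
  qed
  have e4: "mat_mult n B A = mat_one n"
    unfolding mat_eq_one_iff[OF Lmat_mult[OF B A]]
  proof (intro allI impI)
    fix a b assume ab: "a < n" "b < n"
    have "Ml (mat_mult n B A) a b = sg (\<Sum>c<n. Ml A c a * sg (Ml A c b))"
      by (simp add: Ml_mult[OF B A] MlB sg_sum sg_mult mult.commute)
    then show "Ml (mat_mult n B A) a b = (if a = b then 1 else 0)" using g ab unfolding gl2c_def by simp
  qed
  show "A \<in> GL2 n" unfolding GL2_def GL_def using A B e1 e2 e3 e4 by blast
qed

lemma GL2_Lmat: "A \<in> GL2 n \<Longrightarrow> is_Lmat n A"
  unfolding GL2_def GL_def by simp

definition minv :: "lmat \<Rightarrow> lmat" where "minv A = mat_neg (mat_tr A)"

lemma Ml_minv: assumes A: "is_Lmat n A" shows "Ml (minv A) a b = sg (Ml A b a)"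
  unfolding minv_def using Ml_neg[OF Lmat_tr[OF A]] Ml_tr[OF A] by simp

lemma Lmat_minv: "is_Lmat n A \<Longrightarrow> is_Lmat n (minv A)"
  unfolding minv_def by (simp add: Lmat_neg Lmat_tr)

lemma GL2_minv_left: assumes "A \<in> GL2 n" shows "mat_mult n (minv A) A = mat_one n"
proof -
  have A: "is_Lmat n A" using GL2_Lmat[OF assms] .
  have g: "gl2c n A" using assms GL2_iff by blast
  show ?thesis unfolding mat_eq_one_iff[OF Lmat_mult[OF Lmat_minv[OF A] A]]
  proof (intro allI impI)
    fix a b assume ab: "a < n" "b < n"
    have "Ml (mat_mult n (minv A) A) a b = sg (\<Sum>c<n. Ml A c a * sg (Ml A c b))"
      by (simp add: Ml_mult[OF Lmat_minv[OF A] A] Ml_minv[OF A] sg_sum sg_mult mult.commute)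
    then show "Ml (mat_mult n (minv A) A) a b = (if a = b then 1 else 0)" using g ab unfolding gl2c_def by simp
  qed
qed

lemma GL2_minv_right: assumes "A \<in> GL2 n" shows "mat_mult n A (minv A) = mat_one n"
proof -
  have A: "is_Lmat n A" using GL2_Lmat[OF assms] .
  have g: "gl2c n A" using assms GL2_iff by blast
  show ?thesis unfolding mat_eq_one_iff[OF Lmat_mult[OF A Lmat_minv[OF A]]]
  proof (intro allI impI)
    fix a b assume ab: "a < n" "b < n"
    have "Ml (mat_mult n A (minv A)) a b = sg (\<Sum>c<n. sg (Ml A a c) * Ml A b c)"
      by (simp add: Ml_mult[OF A Lmat_minv[OF A]] Ml_minv[OF A] sg_sum sg_mult)
    then show "Ml (mat_mult n A (minv A)) a b = (if a = b then 1 else 0)" using g ab unfolding gl2c_def by simp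
  qed
qed

lemma GL2_minv: assumes "A \<in> GL2 n" shows "minv A \<in> GL2 n"
proof -
  have A: "is_Lmat n A" using GL2_Lmat[OF assms] .
  have g: "gl2c n A" using assms GL2_iff by blast
  have "gl2c n (minv A)" unfolding gl2c_def
  proof (intro conjI allI impI Lmat_minv[OF A])
    fix a b assume ab: "a < n" "b < n"
    show "(\<Sum>c<n. sg (Ml (minv A) a c) * Ml (minv A) b c) = (if a = b then 1 else 0)"
      using g ab unfolding gl2c_def by (simp add: Ml_minv[OF A] mult.commute)
    show "(\<Sum>c<n. Ml (minv A) c a * sg (Ml (minv A) c b)) = (if a = b then 1 else 0)"
      using g ab unfolding gl2c_def by (simp add: Ml_minv[OF A] mult.commute)
  qed
  then show ?thesis using GL2_iff by blast
qed

lemma sum_delta_n: "a < n \<Longrightarrow> (\<Sum>c<(n::nat). (if c = a then f c else 0)) = (f a :: complex fls)"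
proof (induction n)
  case 0 then show ?case by simp
next
  case (Suc n) then show ?case by (cases "a < n") (auto simp: less_Suc_eq)
qed

lemma GL2_mult: assumes "A \<in> GL2 n" "B \<in> GL2 n" shows "mat_mult n A B \<in> GL2 n"
proof -
  have A: "is_Lmat n A" using GL2_Lmat[OF assms(1)] .
  have B: "is_Lmat n B" using GL2_Lmat[OF assms(2)] .
  have gA: "gl2c n A" using assms GL2_iff by blast
  have gB: "gl2c n B" using assms GL2_iff by blast
  have "gl2c n (mat_mult n A B)" unfolding gl2c_def
  proof (intro conjI allI impI Lmat_mult[OF A B])
    fix a b assume ab: "a < n" "b < n"
    have "(\<Sum>c<n. sg (Ml (mat_mult n A B) a c) * Ml (mat_mult n A B) b c)
        = (\<Sum>c<n. (\<Sum>d<n. sg (Ml A a d) * sg (Ml B d c)) * (\<Sum>e<n. Ml A b e * Ml B e c))"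
      by (simp add: Ml_mult[OF A B] sg_sum sg_mult)
    also have "\<dots> = (\<Sum>d<n. \<Sum>e<n. sg (Ml A a d) * Ml A b e * (\<Sum>c<n. sg (Ml B d c) * Ml B e c))"
    proof -
      have "(\<Sum>c<n. (\<Sum>d<n. sg (Ml A a d) * sg (Ml B d c)) * (\<Sum>e<n. Ml A b e * Ml B e c))
          = (\<Sum>c<n. \<Sum>d<n. \<Sum>e<n. sg (Ml A a d) * Ml A b e * (sg (Ml B d c) * Ml B e c))"
        by (simp only: sum_product, intro sum.cong refl, simp add: mult_ac)
      also have "\<dots> = (\<Sum>d<n. \<Sum>c<n. \<Sum>e<n. sg (Ml A a d) * Ml A b e * (sg (Ml B d c) * Ml B e c))"
        by (rule sum.swap)
      also have "\<dots> = (\<Sum>d<n. \<Sum>e<n. \<Sum>c<n. sg (Ml A a d) * Ml A b e * (sg (Ml B d c) * Ml B e c))"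
        by (rule sum.cong[OF refl], rule sum.swap)
      also have "\<dots> = (\<Sum>d<n. \<Sum>e<n. sg (Ml A a d) * Ml A b e * (\<Sum>c<n. sg (Ml B d c) * Ml B e c))"
        by (simp add: sum_distrib_left)
      finally show ?thesis .
    qed
    also have "\<dots> = (\<Sum>d<n. \<Sum>e<n. if e = d then sg (Ml A a d) * Ml A b e else 0)"
      using gB unfolding gl2c_def by (intro sum.cong refl) auto
    also have "\<dots> = (\<Sum>d<n. sg (Ml A a d) * Ml A b d)"
      by (intro sum.cong refl) (simp add: sum.delta')
    also have "\<dots> = (if a = b then 1 else 0)" using gA ab unfolding gl2c_def by simp
    finally show "(\<Sum>c<n. sg (Ml (mat_mult n A B) a c) * Ml (mat_mult n A B) b c) = (if a = b then 1 else 0)" .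
  next
    fix a b assume ab: "a < n" "b < n"
    have "(\<Sum>c<n. Ml (mat_mult n A B) c a * sg (Ml (mat_mult n A B) c b))
        = (\<Sum>c<n. (\<Sum>d<n. Ml A c d * Ml B d a) * (\<Sum>e<n. sg (Ml A c e) * sg (Ml B e b)))"
      by (simp add: Ml_mult[OF A B] sg_sum sg_mult)
    also have "\<dots> = (\<Sum>d<n. \<Sum>e<n. Ml B d a * sg (Ml B e b) * (\<Sum>c<n. Ml A c d * sg (Ml A c e)))"
    proof -
      have "(\<Sum>c<n. (\<Sum>d<n. Ml A c d * Ml B d a) * (\<Sum>e<n. sg (Ml A c e) * sg (Ml B e b)))
          = (\<Sum>c<n. \<Sum>d<n. \<Sum>e<n. Ml B d a * sg (Ml B e b) * (Ml A c d * sg (Ml A c e)))"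
        by (simp only: sum_product, intro sum.cong refl, simp add: mult_ac)
      also have "\<dots> = (\<Sum>d<n. \<Sum>c<n. \<Sum>e<n. Ml B d a * sg (Ml B e b) * (Ml A c d * sg (Ml A c e)))"
        by (rule sum.swap)
      also have "\<dots> = (\<Sum>d<n. \<Sum>e<n. \<Sum>c<n. Ml B d a * sg (Ml B e b) * (Ml A c d * sg (Ml A c e)))"
        by (rule sum.cong[OF refl], rule sum.swap)
      also have "\<dots> = (\<Sum>d<n. \<Sum>e<n. Ml B d a * sg (Ml B e b) * (\<Sum>c<n. Ml A c d * sg (Ml A c e)))"
        by (simp add: sum_distrib_left)
      finally show ?thesis .
    qed
    also have "\<dots> = (\<Sum>d<n. \<Sum>e<n. if e = d then Ml B d a * sg (Ml B e b) else 0)"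
      using gA unfolding gl2c_def by (intro sum.cong refl) auto
    also have "\<dots> = (\<Sum>d<n. Ml B d a * sg (Ml B d b))"
      by (intro sum.cong refl) (simp add: sum.delta')
    also have "\<dots> = (if a = b then 1 else 0)" using gB ab unfolding gl2c_def by simp
    finally show "(\<Sum>c<n. Ml (mat_mult n A B) c a * sg (Ml (mat_mult n A B) c b)) = (if a = b then 1 else 0)" .
  qed
  then show ?thesis using GL2_iff by blast
qed

lemma one_sum_aux: "(\<Sum>c<(n::nat). (if a = c then (1::complex fls) else 0) * (if b = c then 1 else 0))
   = (if a = b \<and> a < n then 1 else 0)"
  by (induction n) auto

lemma GL2_one: "mat_one n \<in> GL2 n"
proof -
  have "gl2c n (mat_one n)" unfolding gl2c_def
  proof (intro conjI allI impI Lmat_one)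
    fix a b assume "a < n" "b < n"
    have "(\<Sum>c<n. sg (Ml (mat_one n) a c) * Ml (mat_one n) b c)
      = (\<Sum>c<n. (if a = c then (1::complex fls) else 0) * (if b = c then 1 else 0))"
      using \<open>a < n\<close> \<open>b < n\<close> by (intro sum.cong refl) (auto simp add: Ml_one)
    then show "(\<Sum>c<n. sg (Ml (mat_one n) a c) * Ml (mat_one n) b c) = (if a = b then 1 else 0)"
      using one_sum_aux[of a b n] \<open>a < n\<close> by simp
    have "(\<Sum>c<n. Ml (mat_one n) c a * sg (Ml (mat_one n) c b))
      = (\<Sum>c<n. (if a = c then (1::complex fls) else 0) * (if b = c then 1 else 0))"
      using \<open>a < n\<close> \<open>b < n\<close> by (intro sum.cong refl) (auto simp add: Ml_one)
    then show "(\<Sum>c<n. Ml (mat_one n) c a * sg (Ml (mat_one n) c b)) = (if a = b then 1 else 0)"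
      using one_sum_aux[of a b n] \<open>a < n\<close> by simp
  qed
  then show ?thesis using GL2_iff by blast
qed

lemma PS_act:
  assumes g: "A \<in> GL2 n" and u: "in_H n u" and v: "in_H n v"
  shows "PS n (act n A u) (act n A v) = PS n u v"
proof -
  have A: "is_Lmat n A" using GL2_Lmat[OF g] .
  have gA: "gl2c n A" using g GL2_iff by blast
  have "PS n (act n A u) (act n A v) = (\<Sum>a<n. (\<Sum>b<n. Ml A a b * Vl u b) * (\<Sum>c<n. sg (Ml A a c) * sg (Vl v c)))"
    unfolding PS_def by (simp add: Vl_act[OF A u] Vl_act[OF A v] sg_sum sg_mult)
  also have "\<dots> = (\<Sum>b<n. \<Sum>c<n. Vl u b * sg (Vl v c) * (\<Sum>a<n. Ml A a b * sg (Ml A a c)))"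
  proof -
    have "(\<Sum>a<n. (\<Sum>b<n. Ml A a b * Vl u b) * (\<Sum>c<n. sg (Ml A a c) * sg (Vl v c)))
       = (\<Sum>a<n. \<Sum>b<n. \<Sum>c<n. Vl u b * sg (Vl v c) * (Ml A a b * sg (Ml A a c)))"
      by (simp only: sum_product, intro sum.cong refl, simp add: mult_ac)
    also have "\<dots> = (\<Sum>b<n. \<Sum>a<n. \<Sum>c<n. Vl u b * sg (Vl v c) * (Ml A a b * sg (Ml A a c)))"
      by (rule sum.swap)
    also have "\<dots> = (\<Sum>b<n. \<Sum>c<n. \<Sum>a<n. Vl u b * sg (Vl v c) * (Ml A a b * sg (Ml A a c)))"
      by (rule sum.cong[OF refl], rule sum.swap)
    also have "\<dots> = (\<Sum>b<n. \<Sum>c<n. Vl u b * sg (Vl v c) * (\<Sum>a<n. Ml A a b * sg (Ml A a c)))"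
      by (simp add: sum_distrib_left)
    finally show ?thesis .
  qed
  also have "\<dots> = (\<Sum>b<n. \<Sum>c<n. if c = b then Vl u b * sg (Vl v c) else 0)"
    using gA unfolding gl2c_def by (intro sum.cong refl) auto
  also have "\<dots> = PS n u v" unfolding PS_def
    by (intro sum.cong refl) (simp add: sum.delta')
  finally show ?thesis .
qed

lemma bform_act:
  assumes g: "A \<in> GL2 n" and u: "in_H n u" and v: "in_H n v"
  shows "bform n (act n A u) (act n A v) = bform n u v"
proof -
  have A: "is_Lmat n A" using GL2_Lmat[OF g] .
  show ?thesis using PS_act[OF assms] bform_fls[OF u v] bform_fls[OF in_H_act[OF A u] in_H_act[OF A v]]
    by simp
qed

lemma in_H_tmul: assumes "in_H n u" shows "in_H n (tmul u)"
proof -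
  obtain N where N: "\<forall>a k. k < N \<longrightarrow> u a k = 0" using assms unfolding in_H_def by blast
  have "\<forall>a k. k < N + 1 \<longrightarrow> u a (k - 1) = 0" using N by simp
  then show ?thesis using assms unfolding in_H_def tmul_def by blast
qed

lemma Vl_tmul: assumes u: "in_H n u" shows "Vl (tmul u) a = fls_X * Vl u a"
proof (rule fls_eqI)
  fix k show "Vl (tmul u) a $$ k = (fls_X * Vl u a) $$ k"
    using Vl_nth[OF in_H_tmul[OF u], of a k] Vl_nth[OF u, of a "k-1"]
    by (simp add: tmul_def fls_X_times_conv_shift)
qed

lemma act_tmul:
  assumes A: "is_Lmat n A" and u: "in_H n u"
  shows "act n A (tmul u) = tmul (act n A u)"
proof (rule Vl_inj[of n])
  show "in_H n (act n A (tmul u))" by (rule in_H_act[OF A in_H_tmul[OF u]])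
  show "in_H n (tmul (act n A u))" by (rule in_H_tmul[OF in_H_act[OF A u]])
  show "Vl (act n A (tmul u)) = Vl (tmul (act n A u))"
    by (rule ext) (simp add: Vl_act[OF A in_H_tmul[OF u]] Vl_tmul[OF in_H_act[OF A u]] Vl_act[OF A u]
        Vl_tmul[OF u] sum_distrib_left mult.left_commute)
qed

definition lowb :: "int \<Rightarrow> hvec \<Rightarrow> bool" where
  "lowb N u \<longleftrightarrow> (\<forall>a k. k < N \<longrightarrow> u a k = 0)"

definition E :: "nat \<Rightarrow> int \<Rightarrow> hvec" where
  "E a j = (\<lambda>b k. if b = a \<and> k = j then 1 else 0)"

definition Lag :: "nat \<Rightarrow> hvec set \<Rightarrow> bool" where
  "Lag n X \<longleftrightarrow> lin_subspace n X \<and> (\<forall>u\<in>X. tmul u \<in> X) \<and> (\<forall>u\<in>X. \<forall>v\<in>X. bform n u v = 0)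
     \<and> (\<forall>v. in_H n v \<and> (\<forall>u\<in>X. bform n u v = 0) \<longrightarrow> v \<in> X) \<and> (\<exists>N. \<forall>u\<in>X. lowb (-N) u)"

lemma in_H_E: "a < n \<Longrightarrow> in_H n (E a j)"
  unfolding in_H_def E_def by (intro conjI exI[of _ j]) auto

lemma bform_E:
  assumes a: "a < n" and v: "in_H n v"
  shows "bform n (E a j) v = \<i> * ((-1) powi (-1 - j) * v a (-1 - j))"
proof -
  have "(\<Sum>p | E a j b p \<noteq> 0 \<and> v b (-1 - p) \<noteq> 0. E a j b p * ((-1) powi (-1 - p) * v b (-1 - p)))
     = (if b = a then (-1) powi (-1 - j) * v a (-1 - j) else 0)" for b
  proof (cases "b = a \<and> v a (-1 - j) \<noteq> 0")
    case True
    then have "{p. E a j b p \<noteq> 0 \<and> v b (-1 - p) \<noteq> 0} = {j}" unfolding E_def by auto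
    then show ?thesis using True unfolding E_def by simp
  next
    case False
    then have e: "{p. E a j b p \<noteq> 0 \<and> v b (-1 - p) \<noteq> 0} = {}" unfolding E_def by auto
    show ?thesis unfolding e using False by auto
  qed
  then have "bform n (E a j) v = \<i> * (\<Sum>b<n. (if b = a then (-1) powi (-1 - j) * v a (-1 - j) else 0))"
    unfolding bform_def by simp
  also have "\<dots> = \<i> * ((-1) powi (-1 - j) * v a (-1 - j))" using a by simp
  finally show ?thesis .
qed

lemma Hsub0_iff: "u \<in> Hsub n 0 \<longleftrightarrow> in_H n u \<and> lowb 0 u"
proof
  assume "u \<in> Hsub n 0"
  then have u: "in_H n u" and h: "\<forall>a<n. \<forall>k. 0 < vidx n a k \<longrightarrow> u a k = 0" unfolding Hsub_def by auto
  have "u a k = 0" if "k < 0" for a k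
  proof (cases "a < n")
    case True
    have "n * (k + 1) \<le> 0" using that by (simp add: mult_nonneg_nonpos)
    then have "0 < vidx n a k" unfolding vidx_def by simp
    then show ?thesis using h True by blast
  next
    case False then show ?thesis using u unfolding in_H_def by simp
  qed
  then show "in_H n u \<and> lowb 0 u" using u unfolding lowb_def by blast
next
  assume "in_H n u \<and> lowb 0 u"
  then have u: "in_H n u" and l: "lowb 0 u" by auto
  have "u a k = 0" if "a < n" "0 < vidx n a k" for a k
  proof -
    have "k < 0"
    proof (rule ccontr)
      assume "\<not> k < 0"
      then have "int n * 1 \<le> int n * (k + 1)" by (intro mult_left_mono) auto
      moreover have "int a < int n" using that by simp
      ultimately show False using that unfolding vidx_def by linarith
    qed
    then show ?thesis using l unfolding lowb_def by blast
  qed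
  then show "u \<in> Hsub n 0" using u unfolding Hsub_def by blast
qed

lemma bform_low:
  assumes "lowb A u" "lowb B v" "A + B \<ge> 0"
  shows "bform n u v = 0"
proof -
  have e: "{p. u a p \<noteq> 0 \<and> v a (-1 - p) \<noteq> 0} = {}" for a
  proof -
    have "u a p = 0 \<or> v a (-1 - p) = 0" for p
    proof (cases "p < A")
      case True then show ?thesis using assms(1) unfolding lowb_def by blast
    next
      case False then have "-1 - p < B" using assms(3) by linarith
      then show ?thesis using assms(2) unfolding lowb_def by blast
    qed
    then show ?thesis by auto
  qed
  show ?thesis unfolding bform_def e by simp
qed

lemma lowb_tmul: "lowb N u \<Longrightarrow> lowb (N + 1) (tmul u)"
  unfolding lowb_def tmul_def by simp

lemma Lag_H0: "Lag n (Hsub n 0)"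
  unfolding Lag_def
proof (intro conjI)
  show "lin_subspace n (Hsub n 0)"
    unfolding lin_subspace_def
  proof (intro conjI ballI allI)
    show "Hsub n 0 \<subseteq> {u. in_H n u}" using Hsub0_iff by blast
    show "(\<lambda>a k. 0) \<in> Hsub n 0" unfolding Hsub0_iff by (simp add: in_H_zero lowb_def)
    fix u v assume "u \<in> Hsub n 0" "v \<in> Hsub n 0"
    then show "(\<lambda>a k. u a k + v a k) \<in> Hsub n 0" unfolding Hsub0_iff lowb_def
      using in_H_add by simp
  next
    fix c u assume "u \<in> Hsub n 0"
    then show "(\<lambda>a k. c * u a k) \<in> Hsub n 0" unfolding Hsub0_iff lowb_def
      using in_H_sc by simp
  qed
  show "\<forall>u\<in>Hsub n 0. tmul u \<in> Hsub n 0"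
  proof
    fix u assume "u \<in> Hsub n 0"
    then have "in_H n u" "lowb 0 u" using Hsub0_iff by auto
    then have "in_H n (tmul u)" "lowb 0 (tmul u)" using in_H_tmul lowb_tmul[of 0 u]
      by (auto simp: lowb_def)
    then show "tmul u \<in> Hsub n 0" using Hsub0_iff by blast
  qed
  show "\<forall>u\<in>Hsub n 0. \<forall>v\<in>Hsub n 0. bform n u v = 0"
    using bform_low[of 0 _ 0] Hsub0_iff by auto
  show "\<forall>v. in_H n v \<and> (\<forall>u\<in>Hsub n 0. bform n u v = 0) \<longrightarrow> v \<in> Hsub n 0"
  proof (intro allI impI)
    fix v assume h: "in_H n v \<and> (\<forall>u\<in>Hsub n 0. bform n u v = 0)"
    have "v a k = 0" if "k < 0" for a k
    proof (cases "a < n")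
      case True
      have "E a (-1 - k) \<in> Hsub n 0" unfolding Hsub0_iff using in_H_E[OF True] that
        by (auto simp: lowb_def E_def)
      then have "bform n (E a (-1 - k)) v = 0" using h by blast
      then show ?thesis using bform_E[OF True, of v "-1-k"] h by simp
    next
      case False then show ?thesis using h unfolding in_H_def by simp
    qed
    then show "v \<in> Hsub n 0" unfolding Hsub0_iff lowb_def using h by blast
  qed
  show "\<exists>N. \<forall>u\<in>Hsub n 0. lowb (- N) u"
    by (rule exI[of _ 0]) (simp add: Hsub0_iff)
qed

lemma act_lowb:
  assumes A: "is_Lmat n A" and L: "\<forall>a b k. A a b k \<noteq> 0 \<longrightarrow> L \<le> k" and u: "lowb N u"
  shows "lowb (L + N) (act n A u)"
  unfolding lowb_def act_def
proof (intro allI impI sum.neutral ballI)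
  fix a k c assume "k < L + N"
  then show "conv (A a c) (u c) k = 0"
    by (rule conv_zero_below[rotated 2]) (use L u in \<open>auto simp: lowb_def not_le[symmetric]\<close>)
qed

lemma act_inv:
  assumes g: "g \<in> GL2 n" and v: "in_H n v"
  shows "act n g (act n (minv g) v) = v" and "act n (minv g) (act n g v) = v"
proof -
  have A: "is_Lmat n g" by (rule GL2_Lmat[OF g])
  show "act n g (act n (minv g) v) = v"
    using act_mult[OF A Lmat_minv[OF A] v] GL2_minv_right[OF g] act_one[OF v] by simp
  show "act n (minv g) (act n g v) = v"
    using act_mult[OF Lmat_minv[OF A] A v] GL2_minv_left[OF g] act_one[OF v] by simp
qed

lemma Lag_act:
  assumes X: "Lag n X" and g: "g \<in> GL2 n"
  shows "Lag n (act n g ` X)"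
proof -
  have A: "is_Lmat n g" by (rule GL2_Lmat[OF g])
  have sub: "lin_subspace n X" and tm: "\<forall>u\<in>X. tmul u \<in> X" and iso: "\<forall>u\<in>X. \<forall>v\<in>X. bform n u v = 0"
    and co: "\<forall>v. in_H n v \<and> (\<forall>u\<in>X. bform n u v = 0) \<longrightarrow> v \<in> X"
    and bd: "\<exists>N. \<forall>u\<in>X. lowb (-N) u" using X unfolding Lag_def by auto
  have XH: "\<And>u. u \<in> X \<Longrightarrow> in_H n u" using sub unfolding lin_subspace_def by auto
  show ?thesis unfolding Lag_def
  proof (intro conjI)
    show "lin_subspace n (act n g ` X)" unfolding lin_subspace_def
    proof (intro conjI ballI allI)
      show "act n g ` X \<subseteq> {u. in_H n u}" using in_H_act[OF A] XH by auto
      show "(\<lambda>a k. 0) \<in> act n g ` X"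
      proof -
        have "(\<lambda>a k. 0) \<in> X" using sub unfolding lin_subspace_def by blast
        then show ?thesis using act_zero[OF A] by (auto intro: rev_image_eqI)
      qed
      fix x y assume "x \<in> act n g ` X" "y \<in> act n g ` X"
      then obtain u v where uv: "u \<in> X" "v \<in> X" "x = act n g u" "y = act n g v" by auto
      have "(\<lambda>a k. u a k + v a k) \<in> X" using sub uv unfolding lin_subspace_def by blast
      then show "(\<lambda>a k. x a k + y a k) \<in> act n g ` X"
        using act_add[OF A XH XH, of u v] uv by (auto intro: rev_image_eqI)
    next
      fix c x assume "x \<in> act n g ` X"
      then obtain u where u: "u \<in> X" "x = act n g u" by auto
      have "(\<lambda>a k. c * u a k) \<in> X" using sub u unfolding lin_subspace_def by blast
      then show "(\<lambda>a k. c * x a k) \<in> act n g ` X"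
        using act_sc[OF A XH, of u c] u by (auto intro: rev_image_eqI)
    qed
    show "\<forall>x\<in>act n g ` X. tmul x \<in> act n g ` X"
    proof
      fix x assume "x \<in> act n g ` X"
      then obtain u where u: "u \<in> X" "x = act n g u" by auto
      then show "tmul x \<in> act n g ` X" using act_tmul[OF A XH[OF u(1)]] tm by (auto intro: rev_image_eqI)
    qed
    show "\<forall>x\<in>act n g ` X. \<forall>y\<in>act n g ` X. bform n x y = 0"
      using bform_act[OF g XH XH] iso by auto
    show "\<forall>v. in_H n v \<and> (\<forall>u\<in>act n g ` X. bform n u v = 0) \<longrightarrow> v \<in> act n g ` X"
    proof (intro allI impI)
      fix v assume h: "in_H n v \<and> (\<forall>u\<in>act n g ` X. bform n u v = 0)"
      define w where "w = act n (minv g) v"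
      have w: "in_H n w" unfolding w_def using in_H_act[OF Lmat_minv[OF A]] h by blast
      have vw: "v = act n g w" unfolding w_def using act_inv(1)[OF g] h by simp
      have "\<forall>u\<in>X. bform n u w = 0"
        using h bform_act[OF g XH w] vw by auto
      then have "w \<in> X" using co w by blast
      then show "v \<in> act n g ` X" using vw by blast
    qed
    show "\<exists>N. \<forall>u\<in>act n g ` X. lowb (- N) u"
    proof -
      obtain N where N: "\<forall>u\<in>X. lowb (-N) u" using bd by blast
      obtain L U where LU: "\<forall>a b k. g a b k \<noteq> 0 \<longrightarrow> L \<le> k \<and> k \<le> U" using Lmat_bounds[OF A] by blast
      have "\<forall>u\<in>X. lowb (L + - N) (act n g u)"
        using act_lowb[OF A] LU N by blast
      then show ?thesis by (intro exI[of _ "N - L"]) auto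
    qed
  qed
qed

definition sc :: "complex \<Rightarrow> hvec \<Rightarrow> hvec" where "sc c u = (\<lambda>a k. c * u a k)"

lemma plus_hvec: "(u + v :: hvec) = (\<lambda>a k. u a k + v a k)" by (simp add: fun_eq_iff)
lemma minus_hvec: "(u - v :: hvec) = (\<lambda>a k. u a k - v a k)" by (simp add: fun_eq_iff)
lemma zero_hvec: "(0 :: hvec) = (\<lambda>a k. 0)" by (simp add: fun_eq_iff)
lemma sum_hvec: "(\<Sum>x\<in>S. f x :: hvec) a k = (\<Sum>x\<in>S. f x a k)"
  by (induction S rule: infinite_finite_induct) auto

interpretation hv: vector_space sc
  by unfold_locales (auto simp: sc_def fun_eq_iff algebra_simps)

lemma lin_subspace_hv: "lin_subspace n X \<Longrightarrow> hv.subspace X"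
  unfolding lin_subspace_def hv.subspace_def sc_def plus_hvec zero_hvec by blast

lemma lin_subspace_in_H: "lin_subspace n X \<Longrightarrow> u \<in> X \<Longrightarrow> in_H n u"
  unfolding lin_subspace_def by blast

lemma hv_card_le_dim:
  assumes "V \<subseteq> hv.span T" "finite T" "hv.independent B" "B \<subseteq> V"
  shows "finite B \<and> card B \<le> hv.dim V"
proof -
  obtain B0 where B0: "B0 \<subseteq> V" "hv.independent B0" "V \<subseteq> hv.span B0" "card B0 = hv.dim V"
    by (rule hv.basis_exists)
  have f0: "finite B0" using hv.independent_span_bound[OF assms(2) B0(2)] B0(1) assms(1) by blast
  have "B \<subseteq> hv.span B0" using assms(4) B0(3) by blast
  then show ?thesis using hv.independent_span_bound[OF f0 assms(3)] B0(4) by simp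
qed

lemma hv_dim0:
  assumes "V \<subseteq> hv.span T" "finite T" "hv.dim V = 0" "x \<in> V"
  shows "x = 0"
proof (rule ccontr)
  assume "x \<noteq> 0"
  then have "hv.independent {x}" by simp
  then show False using hv_card_le_dim[OF assms(1,2), of "{x}"] assms(3,4) by simp
qed

lemma fsum_on:
  assumes sub: "hv.subspace X" and fadd: "\<forall>u\<in>X. \<forall>v\<in>X. f (u + v) = f u + f v"
    and f0: "f 0 = 0" and fin: "finite S" and g: "\<forall>b\<in>S. g b \<in> X"
  shows "f (\<Sum>b\<in>S. g b) = (\<Sum>b\<in>S. f (g b))"
  using fin g
proof (induction S rule: finite_induct)
  case empty then show ?case using f0 by (metis sum.empty)
next
  case (insert x F)
  have sF: "(\<Sum>b\<in>F. g b) \<in> X" using insert.prems by (intro hv.subspace_sum[OF sub]) auto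
  have "f (\<Sum>b\<in>insert x F. g b) = f (g x + (\<Sum>b\<in>F. g b))"
    by (simp only: sum.insert[OF insert.hyps])
  also have "\<dots> = f (g x) + f (\<Sum>b\<in>F. g b)" using fadd insert.prems sF by blast
  also have "\<dots> = f (g x) + (\<Sum>b\<in>F. f (g b))" using insert.IH insert.prems by simp
  also have "\<dots> = (\<Sum>b\<in>insert x F. f (g b))" by (simp only: sum.insert[OF insert.hyps])
  finally show ?case .
qed

lemma DL:
  assumes sub: "hv.subspace X"
    and pl: "\<forall>u v. p (u + v) = p u + p v" "\<forall>c u. p (sc c u) = sc c (p u)"
    and fadd: "\<forall>u\<in>X. \<forall>v\<in>X. f (u + v) = f u + f v" and fsc: "\<forall>c. \<forall>u\<in>X. f (sc c u) = sc c (f u)"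
    and ker: "\<forall>z\<in>X. p z = 0 \<longrightarrow> f z = 0"
    and xo: "xo \<in> X" "f xo = 0" "p xo \<noteq> 0"
    and fin: "p ` X \<subseteq> hv.span T" "finite T"
  shows "hv.dim (f ` X) < hv.dim (p ` X)"
proof -
  have plin: "Vector_Spaces.linear sc sc p" unfolding Vector_Spaces.linear_iff using pl hv.vector_space_axioms by auto
  interpret pL: Vector_Spaces.linear sc sc p by (rule plin)
  define P where "P = p ` X"
  have subP: "hv.subspace P" unfolding P_def by (rule pL.subspace_image[OF sub])
  have "{p xo} \<subseteq> P" using xo unfolding P_def by auto
  moreover have "hv.independent {p xo}" using xo by simp
  ultimately obtain B where B: "{p xo} \<subseteq> B" "B \<subseteq> P" "hv.independent B" "P \<subseteq> hv.span B"
    by (rule hv.maximal_independent_subset_extend)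
  have finB: "finite B" and cardB: "card B \<le> hv.dim P"
    using hv_card_le_dim[OF _ fin(2) B(3) B(2)] fin(1) unfolding P_def by auto
  have cardB': "card B = hv.dim P" using hv.basis_card_eq_dim[OF B(2) B(4) B(3)] .
  have "\<forall>b\<in>B. \<exists>w\<in>X. p w = b \<and> (b = p xo \<longrightarrow> w = xo)"
  proof
    fix b assume "b \<in> B"
    then have "b \<in> P" using B(2) by blast
    then obtain w where "w \<in> X" "p w = b" unfolding P_def by blast
    then show "\<exists>w\<in>X. p w = b \<and> (b = p xo \<longrightarrow> w = xo)"
      using xo(1) by (cases "b = p xo") auto
  qed
  then obtain w where w: "\<forall>b\<in>B. w b \<in> X \<and> p (w b) = b \<and> (b = p xo \<longrightarrow> w b = xo)" by metis
  have f0: "f 0 = 0" using fsc hv.subspace_0[OF sub] by (metis hv.scale_zero_left)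
  define T' where "T' = (\<lambda>b. f (w b)) ` (B - {p xo})"
  have "f ` X \<subseteq> hv.span T'"
  proof
    fix y assume "y \<in> f ` X"
    then obtain u where u: "u \<in> X" "y = f u" by blast
    have "p u \<in> hv.span B" using u B(4) unfolding P_def by blast
    then obtain c where c: "p u = (\<Sum>b\<in>B. sc (c b) b)" using hv.span_finite[OF finB] by auto
    define s where "s = (\<Sum>b\<in>B. sc (c b) (w b))"
    have sX: "s \<in> X" unfolding s_def using w by (intro hv.subspace_sum[OF sub] hv.subspace_scale[OF sub]) auto
    have "p s = (\<Sum>b\<in>B. sc (c b) (p (w b)))" unfolding s_def by (simp add: pL.sum pL.scale)
    also have "\<dots> = p u" using c w by simp
    finally have ps: "p s = p u" .
    have zX: "u - s \<in> X" using hv.subspace_diff[OF sub u(1) sX] .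
    have "p (u - s) = 0" using ps by (simp add: pL.diff)
    then have fz: "f (u - s) = 0" using ker zX by blast
    have "f ((u - s) + s) = f (u - s) + f s" using fadd zX sX by blast
    then have "f u = f s" using fz by (metis add_0 diff_add_cancel)
    also have "\<dots> = (\<Sum>b\<in>B. f (sc (c b) (w b)))"
      unfolding s_def by (rule fsum_on[OF sub fadd f0 finB]) (use w hv.subspace_scale[OF sub] in auto)
    also have "\<dots> = (\<Sum>b\<in>B. sc (c b) (f (w b)))" using fsc w by simp
    also have "\<dots> = (\<Sum>b\<in>B - {p xo}. sc (c b) (f (w b)))"
    proof (rule sum.mono_neutral_right[OF finB])
      show "B - {p xo} \<subseteq> B" by blast
      show "\<forall>i\<in>B - (B - {p xo}). sc (c i) (f (w i)) = 0"
        using w xo(2) B(1) by (auto simp: sc_def zero_hvec)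
    qed
    also have "\<dots> \<in> hv.span T'" unfolding T'_def
      by (intro hv.span_sum hv.span_scale hv.span_base) auto
    finally show "y \<in> hv.span T'" using u by simp
  qed
  then have "hv.dim (f ` X) \<le> card T'" using hv.dim_le_card[of "f ` X" T'] finB unfolding T'_def by auto
  also have "\<dots> \<le> card (B - {p xo})" unfolding T'_def by (rule card_image_le) (use finB in auto)
  also have "\<dots> < card B" using finB B(1) by (intro card_Diff1_less) auto
  finally show ?thesis using cardB' unfolding P_def by simp
qed

definition pp :: "hvec \<Rightarrow> hvec" where "pp u = (\<lambda>a k. if k < 0 then u a k else 0)"

lemma pp_add: "pp (u + v) = pp u + pp v" unfolding pp_def by (simp add: fun_eq_iff)
lemma pp_sc: "pp (sc c u) = sc c (pp u)" unfolding pp_def sc_def by (simp add: fun_eq_iff)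

lemma pp_zero_iff: "pp u = 0 \<longleftrightarrow> lowb 0 u"
  unfolding pp_def lowb_def by (auto simp: fun_eq_iff)

definition Bx :: "nat \<Rightarrow> int \<Rightarrow> hvec set" where
  "Bx n N = (\<lambda>(a, k). E a k) ` ({..<n} \<times> {-N..<0})"

lemma Bx_finite: "finite (Bx n N)" unfolding Bx_def by simp

lemma pp_span:
  assumes u: "in_H n u" and l: "lowb (-N) u"
  shows "pp u \<in> hv.span (Bx n N)"
proof -
  have eq: "pp u = (\<Sum>ak\<in>{..<n} \<times> {-N..<0}. sc (u (fst ak) (snd ak)) (E (fst ak) (snd ak)))"
  proof (intro ext)
    fix a k
    have "(\<Sum>ak\<in>{..<n} \<times> {-N..<0}. sc (u (fst ak) (snd ak)) (E (fst ak) (snd ak))) a k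
       = (\<Sum>ak\<in>{..<n} \<times> {-N..<0}. (if ak = (a, k) then u a k else 0))"
      unfolding sum_hvec by (intro sum.cong refl) (auto simp: sc_def E_def)
    also have "\<dots> = (if (a, k) \<in> {..<n} \<times> {-N..<0} then u a k else 0)"
      by (simp add: sum.delta')
    also have "\<dots> = pp u a k"
      using u l unfolding pp_def in_H_def lowb_def by auto
    finally show "pp u a k = (\<Sum>ak\<in>{..<n} \<times> {-N..<0}. sc (u (fst ak) (snd ak)) (E (fst ak) (snd ak))) a k" by simp
  qed
  show ?thesis unfolding eq Bx_def
    by (intro hv.span_sum hv.span_scale hv.span_base) (auto intro: image_eqI)
qed

lemma bform_interval:
  assumes A: "lowb A u" and B: "lowb B v"
  shows "bform n u v = \<i> * (\<Sum>a<n. \<Sum>p\<in>{A..-1-B}. u a p * ((-1) powi (-1 - p) * v a (-1 - p)))"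
proof -
  have "(\<Sum>p | u a p \<noteq> 0 \<and> v a (-1 - p) \<noteq> 0. u a p * ((-1) powi (-1 - p) * v a (-1 - p)))
      = (\<Sum>p\<in>{A..-1-B}. u a p * ((-1) powi (-1 - p) * v a (-1 - p)))" for a
  proof (rule sum.mono_neutral_left)
    show "finite {A..-1-B}" by simp
    show "{p. u a p \<noteq> 0 \<and> v a (-1 - p) \<noteq> 0} \<subseteq> {A..-1-B}"
    proof
      fix p assume p: "p \<in> {p. u a p \<noteq> 0 \<and> v a (-1 - p) \<noteq> 0}"
      then have "\<not> p < A" using A unfolding lowb_def by auto
      moreover have "\<not> -1 - p < B" using p B unfolding lowb_def by auto
      ultimately show "p \<in> {A..-1-B}" by simp
    qed
    show "\<forall>i\<in>{A..-1-B} - {p. u a p \<noteq> 0 \<and> v a (-1 - p) \<noteq> 0}. u a i * ((-1) powi (-1 - i) * v a (-1 - i)) = 0"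
      by auto
  qed
  then show ?thesis unfolding bform_def by simp
qed

lemma tmul_pow: "(tmul ^^ j) u a k = u a (k - int j)"
  by (induction j arbitrary: k) (auto simp: tmul_def algebra_simps)

lemma find_x1:
  assumes tm: "\<forall>u\<in>X. tmul u \<in> X"
  shows "u \<in> X \<Longrightarrow> lowb (- int m) u \<Longrightarrow> pp u \<noteq> 0 \<Longrightarrow> \<exists>x1\<in>X. lowb (-1) x1 \<and> pp x1 \<noteq> 0"
proof (induction m arbitrary: u)
  case 0
  then show ?case using pp_zero_iff by (metis minus_zero of_nat_0)
next
  case (Suc m)
  show ?case
  proof (cases "lowb (-1) u")
    case True then show ?thesis using Suc.prems by blast
  next
    case False
    then obtain a k where ak: "k < -1" "u a k \<noteq> 0" unfolding lowb_def by auto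
    have "tmul u \<in> X" using tm Suc.prems by blast
    moreover have "lowb (- int m) (tmul u)" using Suc.prems(2) unfolding lowb_def tmul_def by auto
    moreover have "pp (tmul u) \<noteq> 0"
    proof
      assume "pp (tmul u) = 0"
      then have "tmul u a (k + 1) = 0" using ak unfolding pp_zero_iff lowb_def by auto
      then show False using ak unfolding tmul_def by simp
    qed
    ultimately show ?thesis using Suc.IH by blast
  qed
qed

lemma cprime_exists:
  fixes c :: "nat \<Rightarrow> complex"
  assumes cc: "(\<Sum>a<n. c a * c a) = 0" and nz: "a0 < n" "c a0 \<noteq> 0"
  shows "\<exists>c'. (\<Sum>a<n. c a * c' a) = 1 \<and> (\<Sum>a<n. c' a * c' a) = 0"
proof -
  define S where "S = (\<Sum>a<n. c a * cnj (c a))"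
  have S: "S = of_real (\<Sum>a<n. (cmod (c a))^2)"
  proof -
    have "S = (\<Sum>a<n. of_real ((cmod (c a))^2))"
      unfolding S_def by (intro sum.cong refl) (simp add: complex_norm_square del: of_real_power)
    then show ?thesis by simp
  qed
  have "(\<Sum>a<n. (cmod (c a))^2) > 0"
  proof -
    have "(\<Sum>a<n. (cmod (c a))^2) \<ge> (cmod (c a0))^2"
      using nz(1) by (intro member_le_sum) auto
    moreover have "(cmod (c a0))^2 > 0" using nz(2) by simp
    ultimately show ?thesis by linarith
  qed
  then have S0: "S \<noteq> 0" unfolding S by (simp only: of_real_eq_0_iff)
  define d where "d a = cnj (c a) / S" for a
  define q where "q = (\<Sum>a<n. d a * d a)"
  define c' where "c' a = d a - (q / 2) * c a" for a
  have cd: "(\<Sum>a<n. c a * d a) = 1" unfolding d_def using S0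
    by (simp add: sum_divide_distrib[symmetric] S_def)
  have "(\<Sum>a<n. c a * c' a) = (\<Sum>a<n. c a * d a) - (q/2) * (\<Sum>a<n. c a * c a)"
    unfolding c'_def by (simp add: algebra_simps sum_subtractf sum_distrib_left)
  then have 1: "(\<Sum>a<n. c a * c' a) = 1" using cd cc by simp
  have "(\<Sum>a<n. c' a * c' a) = (\<Sum>a<n. d a * d a) - q * (\<Sum>a<n. c a * d a) + (q/2)^2 * (\<Sum>a<n. c a * c a)"
    unfolding c'_def by (simp add: algebra_simps sum_subtractf sum.distrib sum_distrib_left power2_eq_square)
  then have 2: "(\<Sum>a<n. c' a * c' a) = 0" using cd cc unfolding q_def by simp
  show ?thesis using 1 2 by blast
qed

unbundle fps_syntax

lemma XXi: "fls_X * fls_X_inv = (1::complex fls)"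
  by (rule fls_eqI) (simp add: fls_X_times_conv_shift)

definition kmat :: "nat \<Rightarrow> (nat \<Rightarrow> complex) \<Rightarrow> (nat \<Rightarrow> complex) \<Rightarrow> complex \<Rightarrow> lmat" where
  "kmat n c c' s = (\<lambda>a b j. if a < n \<and> b < n then
    (if j = 0 then (if a = b then 1 else 0) - c a * c' b - c' a * c b + s * c' a * c' b
     else if j = 1 then c a * c' b else if j = -1 then - (c' a * c b) else 0) else 0)"

lemma Lmat_kmat: "is_Lmat n (kmat n c c' s)"
proof -
  have "finite {j. kmat n c c' s a b j \<noteq> 0}" for a b
    by (rule finite_subset[of _ "{-1, 0, 1}"]) (auto simp: kmat_def split: if_splits)
  then show ?thesis unfolding is_Lmat_def kmat_def by auto
qed

abbreviation fc :: "complex \<Rightarrow> complex fls" where "fc x \<equiv> fls_const x"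

lemma Ml_kmat0:
  assumes "a < n" "b < n"
  shows "Ml (kmat n c c' s) a b = (if a = b then 1 else 0) + (fls_X - 1) * fc (c a * c' b)
     + (- fls_X_inv - 1) * fc (c' a * c b) + fc (s * c' a * c' b)"
proof (rule fls_eqI)
  fix j
  have e: "Ml (kmat n c c' s) a b $$ j = kmat n c c' s a b j" by (rule Ml_nth[OF Lmat_kmat])
  show "Ml (kmat n c c' s) a b $$ j = ((if a = b then 1 else 0) + (fls_X - 1) * fc (c a * c' b)
     + (- fls_X_inv - 1) * fc (c' a * c b) + fc (s * c' a * c' b)) $$ j"
    unfolding e using assms by (auto simp: kmat_def)
qed

lemma Ml_kmat:
  assumes "a < n" "b < n"
  shows "Ml (kmat n c c' s) a b = (if a = b then 1 else 0) + (fls_X - 1) * fc (c a) * fc (c' b)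
     + (- fls_X_inv - 1) * fc (c' a) * fc (c b) + fc s * fc (c' a) * fc (c' b)"
  unfolding Ml_kmat0[OF assms] by (simp add: fls_const_mult_const mult.assoc)

lemma L1sum: "a < n \<Longrightarrow> (\<Sum>e<(n::nat). (if a = e then 1 else 0) * g e) = (g a :: complex fls)"
proof -
  assume a: "a < n"
  have "(\<Sum>e<n. (if a = e then 1 else 0) * g e) = (\<Sum>e<n. (if a = e then g e else 0))"
    by (intro sum.cong refl) auto
  then show ?thesis using a by simp
qed

lemma GEN:
  fixes p1 p2 q1 q2 :: "complex fls" and C C' :: "nat \<Rightarrow> complex fls"
  assumes ab: "a < n" "b < n"
  shows "(\<Sum>e<n. ((if a = e then 1 else 0) + p1 * C' e + p2 * C e) * ((if b = e then 1 else 0) + q1 * C' e + q2 * C e))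
   = (if a = b then 1 else 0) + q1 * C' a + q2 * C a + p1 * C' b + p2 * C b
     + p1 * q1 * (\<Sum>e<n. C' e * C' e) + (p1 * q2 + p2 * q1) * (\<Sum>e<n. C' e * C e) + p2 * q2 * (\<Sum>e<n. C e * C e)"
proof -
  have eq: "((if a = e then 1 else 0) + p1 * C' e + p2 * C e) * ((if b = e then 1 else 0) + q1 * C' e + q2 * C e)
    = (if a = e then 1 else 0) * (if b = e then 1 else 0) + (if a = e then 1 else 0) * (q1 * C' e + q2 * C e)
      + (if b = e then 1 else 0) * (p1 * C' e + p2 * C e)
      + (p1 * q1 * (C' e * C' e) + (p1 * q2 + p2 * q1) * (C' e * C e) + p2 * q2 * (C e * C e))" for e
    by (simp add: algebra_simps)
  have s1: "(\<Sum>e<n. (if a = e then 1 else 0) * (if b = e then 1 else (0::complex fls))) = (if a = b then 1 else 0)"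
    using one_sum_aux[of a b n] ab by simp
  have s2: "(\<Sum>e<n. (if a = e then 1 else 0) * (q1 * C' e + q2 * C e)) = q1 * C' a + q2 * C a"
    by (rule L1sum[OF ab(1)])
  have s3: "(\<Sum>e<n. (if b = e then 1 else 0) * (p1 * C' e + p2 * C e)) = p1 * C' b + p2 * C b"
    by (rule L1sum[OF ab(2)])
  have s4: "(\<Sum>e<n. p1 * q1 * (C' e * C' e)) + (\<Sum>e<n. (p1 * q2 + p2 * q1) * (C' e * C e)) + (\<Sum>e<n. p2 * q2 * (C e * C e))
     = p1 * q1 * (\<Sum>e<n. C' e * C' e) + (p1 * q2 + p2 * q1) * (\<Sum>e<n. C' e * C e) + p2 * q2 * (\<Sum>e<n. C e * C e)"
    by (simp only: sum_distrib_left)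
  show ?thesis unfolding eq sum.distrib s1 s2 s3 s4 by (simp add: algebra_simps)
qed

lemma kid1:
  fixes al be al' be' S Ca Cb C'a C'b :: "'a::comm_ring_1"
  assumes "al + be' + be' * al = 0" "be + al' + al' * be = 0" "S * (2 + be + be') = 0"
  shows "(al * Cb + S * C'b) * C'a + (be * C'b) * Ca + (al' * Ca + S * C'a) * C'b + (be' * C'a) * Cb
     + ((al' * Ca + S * C'a) * (be * C'b) + (be' * C'a) * (al * Cb + S * C'b)) = 0"
proof -
  have "(al * Cb + S * C'b) * C'a + (be * C'b) * Ca + (al' * Ca + S * C'a) * C'b + (be' * C'a) * Cb
     + ((al' * Ca + S * C'a) * (be * C'b) + (be' * C'a) * (al * Cb + S * C'b))
     = (al + be' + be' * al) * (Cb * C'a) + (be + al' + al' * be) * (C'b * Ca) + (S * (2 + be + be')) * (C'a * C'b)"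
    by (simp add: algebra_simps)
  then show ?thesis using assms by simp
qed

lemma kid2:
  fixes al be al' be' S Ca Cb C'a C'b :: "'a::comm_ring_1"
  assumes "al + be' + al * be' = 0" "be + al' + be * al' = 0" "S * (2 + al + al') = 0"
  shows "(be' * Cb + S * C'b) * C'a + (al' * C'b) * Ca + (be * Ca + S * C'a) * C'b + (al * C'a) * Cb
     + ((be * Ca + S * C'a) * (al' * C'b) + (al * C'a) * (be' * Cb + S * C'b)) = 0"
proof -
  have "(be' * Cb + S * C'b) * C'a + (al' * C'b) * Ca + (be * Ca + S * C'a) * C'b + (al * C'a) * Cb
     + ((be * Ca + S * C'a) * (al' * C'b) + (al * C'a) * (be' * Cb + S * C'b))
     = (al + be' + al * be') * (Cb * C'a) + (be + al' + be * al') * (C'b * Ca) + (S * (2 + al + al')) * (C'a * C'b)"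
    by (simp add: algebra_simps)
  then show ?thesis using assms by simp
qed

lemma fc_add: "fc (x + y) = fc x + fc y"
  by (rule fls_eqI) simp
lemma fc_sum: "fc (\<Sum>x\<in>A. f x) = (\<Sum>x\<in>A. fc (f x))"
  by (induction A rule: infinite_finite_induct) (auto simp: fc_add)

lemma kmat_GL2:
  assumes c1: "(\<Sum>a<n. c a * c' a) = 1" and c2: "(\<Sum>a<n. c' a * c' a) = 0" and c3: "(\<Sum>a<n. c a * c a) = 0"
  shows "kmat n c c' s \<in> GL2 n"
proof -
  define al where "al = (fls_X - 1 :: complex fls)"
  define be where "be = (- fls_X_inv - 1 :: complex fls)"
  define al' where "al' = (- fls_X - 1 :: complex fls)"
  define be' where "be' = (fls_X_inv - 1 :: complex fls)"
  define S where "S = fc s"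
  define C where "C e = fc (c e)" for e
  define C' where "C' e = fc (c' e)" for e
  have D11: "(\<Sum>e<n. C' e * C' e) = 0" using arg_cong[OF c2, of fc] unfolding C'_def fc_sum
    by (simp add: fls_const_mult_const)
  have D12: "(\<Sum>e<n. C' e * C e) = 1" using arg_cong[OF c1, of fc] unfolding C'_def C_def fc_sum
    by (simp add: fls_const_mult_const mult.commute)
  have D22: "(\<Sum>e<n. C e * C e) = 0" using arg_cong[OF c3, of fc] unfolding C_def fc_sum
    by (simp add: fls_const_mult_const)
  have sal: "sg al = al'" unfolding al_def al'_def by (simp add: sg_diff sg_X)
  have sbe: "sg be = be'" unfolding be_def be'_def
    by (simp add: sg_diff sg_X_inv) (rule fls_eqI, simp)
  have K: "Ml (kmat n c c' s) a b = (if a = b then 1 else 0) + (al * C a + S * C' a) * C' b + (be * C' a) * C b"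
    if "a < n" "b < n" for a b
    unfolding Ml_kmat[OF that] al_def be_def S_def C_def C'_def by (simp add: algebra_simps)
  have K': "Ml (kmat n c c' s) a b = (if a = b then 1 else 0) + (be * C b + S * C' b) * C' a + (al * C' b) * C a"
    if "a < n" "b < n" for a b
    unfolding K[OF that] by (simp add: algebra_simps)
  have sgK: "sg (Ml (kmat n c c' s) a b) = (if a = b then 1 else 0) + (al' * C a + S * C' a) * C' b + (be' * C' a) * C b"
    if "a < n" "b < n" for a b
    unfolding K[OF that] by (simp add: sg_add sg_mult sal sbe S_def C_def C'_def)
  have sgK': "sg (Ml (kmat n c c' s) a b) = (if a = b then 1 else 0) + (be' * C b + S * C' b) * C' a + (al' * C' b) * C a"
    if "a < n" "b < n" for a b
    unfolding sgK[OF that] by (simp add: algebra_simps)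
  have XXi': "fls_X_inv * fls_X = (1::complex fls)" by (subst mult.commute) (rule XXi)
  have i1: "al + be' + be' * al = 0" unfolding al_def be'_def by (simp add: algebra_simps, rule XXi)
  have i2: "be + al' + al' * be = 0" unfolding be_def al'_def by (simp add: algebra_simps, rule XXi)
  have i3: "S * (2 + be + be') = 0" unfolding be_def be'_def by simp
  have i4: "S * (2 + al + al') = 0" unfolding al_def al'_def by simp
  have i1': "al + be' + al * be' = 0" using i1 by (simp add: mult.commute)
  have i2': "be + al' + be * al' = 0" using i2 by (simp add: mult.commute)
  have "gl2c n (kmat n c c' s)" unfolding gl2c_def
  proof (intro conjI allI impI Lmat_kmat)
    fix a b assume ab: "a < n" "b < n"
    have "(\<Sum>e<n. sg (Ml (kmat n c c' s) a e) * Ml (kmat n c c' s) b e)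
       = (\<Sum>e<n. ((if a = e then 1 else 0) + (al' * C a + S * C' a) * C' e + (be' * C' a) * C e)
            * ((if b = e then 1 else 0) + (al * C b + S * C' b) * C' e + (be * C' b) * C e))"
    proof (intro sum.cong refl)
      fix e assume "e \<in> {..<n}" then have e: "e < n" by simp
      show "sg (Ml (kmat n c c' s) a e) * Ml (kmat n c c' s) b e = ((if a = e then 1 else 0) + (al' * C a + S * C' a) * C' e + (be' * C' a) * C e)
            * ((if b = e then 1 else 0) + (al * C b + S * C' b) * C' e + (be * C' b) * C e)"
        by (simp only: sgK[OF ab(1) e] K[OF ab(2) e])
    qed
    also have "\<dots> = (if a = b then 1 else 0)"
      unfolding GEN[OF ab] D11 D12 D22 using kid1[OF i1 i2 i3, where Ca = "C a" and Cb = "C b" and C'a = "C' a" and C'b = "C' b"]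
      by (simp add: algebra_simps)
    finally show "(\<Sum>e<n. sg (Ml (kmat n c c' s) a e) * Ml (kmat n c c' s) b e) = (if a = b then 1 else 0)" .
  next
    fix a b assume ab: "a < n" "b < n"
    have "(\<Sum>e<n. Ml (kmat n c c' s) e a * sg (Ml (kmat n c c' s) e b))
       = (\<Sum>e<n. ((if a = e then 1 else 0) + (be * C a + S * C' a) * C' e + (al * C' a) * C e)
            * ((if b = e then 1 else 0) + (be' * C b + S * C' b) * C' e + (al' * C' b) * C e))"
    proof (intro sum.cong refl)
      fix e assume "e \<in> {..<n}" then have e: "e < n" by simp
      have 1: "(e = a) = (a = e)" "(e = b) = (b = e)" by auto
      show "Ml (kmat n c c' s) e a * sg (Ml (kmat n c c' s) e b) = ((if a = e then 1 else 0) + (be * C a + S * C' a) * C' e + (al * C' a) * C e)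
            * ((if b = e then 1 else 0) + (be' * C b + S * C' b) * C' e + (al' * C' b) * C e)"
        by (simp only: sgK'[OF e ab(2)] K'[OF e ab(1)] 1)
    qed
    also have "\<dots> = (if a = b then 1 else 0)"
      unfolding GEN[OF ab] D11 D12 D22 using kid2[OF i1' i2' i4, where Ca = "C a" and Cb = "C b" and C'a = "C' a" and C'b = "C' b"]
      by (simp add: algebra_simps)
    finally show "(\<Sum>e<n. Ml (kmat n c c' s) e a * sg (Ml (kmat n c c' s) e b)) = (if a = b then 1 else 0)" .
  qed
  then show ?thesis using GL2_iff by blast
qed

lemma kmat_low: "kmat n c c' s a b i \<noteq> 0 \<Longrightarrow> -1 \<le> i"
  unfolding kmat_def by (auto split: if_splits)

lemma kmat_m1: "kmat n c c' s a e (-1) = (if a < n \<and> e < n then - (c' a * c e) else 0)"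
  unfolding kmat_def by simp
lemma kmat_0: "kmat n c c' s a e 0 = (if a < n \<and> e < n then (if a = e then 1 else 0) - c a * c' e - c' a * c e + s * c' a * c' e else 0)"
  unfolding kmat_def by simp

lemma conv_k:
  assumes "lowb B v"
  shows "conv (kmat n c c' s a e) (v e) j = (\<Sum>i\<in>{-1..j-B}. kmat n c c' s a e i * v e (j - i))"
  by (rule conv_bounds) (use kmat_low assms in \<open>force simp: lowb_def\<close>)+

lemma kact_z:
  assumes z: "lowb 0 z" and cz: "(\<Sum>e<n. c e * z e 0) = 0"
  shows "lowb 0 (act n (kmat n c c' s) z)"
  unfolding lowb_def
proof (intro allI impI)
  fix a j :: int assume j: "j < 0"
  fix a :: nat
  have "act n (kmat n c c' s) z a j = (\<Sum>e<n. \<Sum>i\<in>{-1..j}. kmat n c c' s a e i * z e (j - i))"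
    unfolding act_def using conv_k[OF z] by simp
  also have "\<dots> = 0"
  proof (cases "j = -1")
    case True
    have "(\<Sum>e<n. \<Sum>i\<in>{-1..j}. kmat n c c' s a e i * z e (j - i)) = (\<Sum>e<n. kmat n c c' s a e (-1) * z e 0)"
      using True by simp
    also have "\<dots> = (if a < n then - c' a * (\<Sum>e<n. c e * z e 0) else 0)"
      by (auto simp: kmat_m1 sum_distrib_left intro!: sum.cong)
    finally show ?thesis using cz by simp
  next
    case False
    then have "{-1..j} = {}" using j by auto
    then show ?thesis by simp
  qed
  finally show "act n (kmat n c c' s) z a j = 0" .
qed

lemma kact_x1:
  assumes x: "lowb (-1) x1" and cdef: "\<forall>e<n. c e = x1 e (-1)" and sdef: "s = (\<Sum>e<n. c e * x1 e 0)"
    and cc: "(\<Sum>e<n. c e * c e) = 0" and cc': "(\<Sum>e<n. c e * c' e) = 1"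
  shows "lowb 0 (act n (kmat n c c' s) x1)"
  unfolding lowb_def
proof (intro allI impI)
  fix j :: int assume j: "j < 0"
  fix a :: nat
  have "act n (kmat n c c' s) x1 a j = (\<Sum>e<n. \<Sum>i\<in>{-1..j+1}. kmat n c c' s a e i * x1 e (j - i))"
    unfolding act_def using conv_k[OF x] by simp
  also have "\<dots> = 0"
  proof (cases "j = -1")
    case True
    have "{-1..j+1} = {-1, 0}" using True by auto
    then have "(\<Sum>e<n. \<Sum>i\<in>{-1..j+1}. kmat n c c' s a e i * x1 e (j - i))
        = (\<Sum>e<n. kmat n c c' s a e (-1) * x1 e 0 + kmat n c c' s a e 0 * x1 e (-1))"
      using True by simp
    also have "\<dots> = (if a < n then - c' a * s + c a - c a * (\<Sum>e<n. c' e * c e) - c' a * (\<Sum>e<n. c e * c e)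
          + s * c' a * (\<Sum>e<n. c' e * c e) else 0)"
    proof (cases "a < n")
      case True
      have "(\<Sum>e<n. kmat n c c' s a e (-1) * x1 e 0 + kmat n c c' s a e 0 * x1 e (-1))
          = (\<Sum>e<n. - c' a * (c e * x1 e 0) + ((if a = e then c e else 0) - c a * (c' e * c e) - c' a * (c e * c e)
              + s * c' a * (c' e * c e)))"
        using True cdef by (intro sum.cong refl) (auto simp: kmat_m1 kmat_0 algebra_simps)
      also have "\<dots> = - c' a * s + c a - c a * (\<Sum>e<n. c' e * c e) - c' a * (\<Sum>e<n. c e * c e)
          + s * c' a * (\<Sum>e<n. c' e * c e)"
        using True by (simp add: sum.distrib sum_subtractf sum_distrib_left sdef sum_negf)
      finally show ?thesis using True by simp
    qed (simp add: kmat_m1 kmat_0)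
    also have "\<dots> = 0" using cc cc' by (simp add: mult.commute)
    finally show ?thesis .
  next
    case False
    show ?thesis
    proof (cases "j = -2")
      case True
      then have "(\<Sum>e<n. \<Sum>i\<in>{-1..j+1}. kmat n c c' s a e i * x1 e (j - i)) = (\<Sum>e<n. kmat n c c' s a e (-1) * x1 e (-1))"
        by simp
      also have "\<dots> = (if a < n then - c' a * (\<Sum>e<n. c e * c e) else 0)"
        using cdef by (auto simp: kmat_m1 sum_distrib_left intro!: sum.cong)
      finally show ?thesis using cc by simp
    next
      case False
      then have "{-1..j+1} = {}" using j \<open>j \<noteq> -1\<close> by auto
      then show ?thesis by simp
    qed
  qed
  finally show "act n (kmat n c c' s) x1 a j = 0" .
qed

lemma lowb_mono: "lowb A u \<Longrightarrow> B \<le> A \<Longrightarrow> lowb B u"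
  unfolding lowb_def by auto

lemma Lag_parts:
  assumes "Lag n X"
  shows "lin_subspace n X" "\<forall>u\<in>X. tmul u \<in> X" "\<forall>u\<in>X. \<forall>v\<in>X. bform n u v = 0"
    "\<forall>v. in_H n v \<and> (\<forall>u\<in>X. bform n u v = 0) \<longrightarrow> v \<in> X" "\<exists>N. \<forall>u\<in>X. lowb (-N) u"
  using assms unfolding Lag_def by auto

lemma Lag_base:
  assumes X: "Lag n X" and z: "\<forall>u\<in>X. pp u = 0"
  shows "X = Hsub n 0"
proof
  show "X \<subseteq> Hsub n 0"
  proof
    fix x assume x: "x \<in> X"
    then have "in_H n x" using Lag_parts(1)[OF X] unfolding lin_subspace_def by auto
    moreover have "lowb 0 x" using z x pp_zero_iff by blast
    ultimately show "x \<in> Hsub n 0" using Hsub0_iff by blast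
  qed
  show "Hsub n 0 \<subseteq> X"
  proof
    fix v assume v: "v \<in> Hsub n 0"
    have "\<forall>u\<in>X. bform n u v = 0"
      using z v unfolding pp_zero_iff Hsub0_iff by (auto intro: bform_low[of 0 _ 0])
    then show "v \<in> X" using Lag_parts(4)[OF X] v Hsub0_iff by blast
  qed
qed

lemma Lag_step:
  assumes X: "Lag n X" and nz: "\<exists>u\<in>X. pp u \<noteq> 0"
  shows "\<exists>k\<in>GL2 n. hv.dim (pp ` act n k ` X) < hv.dim (pp ` X)"
proof -
  note sub = Lag_parts(1)[OF X] and tm = Lag_parts(2)[OF X] and iso = Lag_parts(3)[OF X]
  obtain N where N: "\<forall>u\<in>X. lowb (-N) u" using Lag_parts(5)[OF X] by blast
  have XH: "\<And>u. u \<in> X \<Longrightarrow> in_H n u" using sub unfolding lin_subspace_def by auto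
  obtain u where u: "u \<in> X" "pp u \<noteq> 0" using nz by blast
  have "lowb (- int (nat N)) u" using N u by (auto intro: lowb_mono)
  then obtain x1 where x1: "x1 \<in> X" "lowb (-1) x1" "pp x1 \<noteq> 0"
    using find_x1[OF tm u(1) _ u(2)] by blast
  have x1H: "in_H n x1" using XH x1(1) .
  define c where "c e = x1 e (-1)" for e
  define s where "s = (\<Sum>e<n. c e * x1 e 0)"
  obtain a0 where a0: "a0 < n" "c a0 \<noteq> 0"
  proof -
    obtain a k where ak: "k < 0" "x1 a k \<noteq> 0" using x1(3) unfolding pp_zero_iff lowb_def by auto
    have "\<not> k < -1" using ak x1(2) unfolding lowb_def by blast
    then have "k = -1" using ak by linarith
    moreover have "a < n"
    proof (rule ccontr)
      assume "\<not> a < n" then have "x1 a k = 0" using x1H unfolding in_H_def by simp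
      then show False using ak by simp
    qed
    ultimately show ?thesis using that ak unfolding c_def by blast
  qed
  have "bform n x1 (tmul x1) = 0" using iso x1(1) tm by blast
  moreover have "bform n x1 (tmul x1) = \<i> * (\<Sum>a<n. c a * c a)"
  proof -
    have lt: "lowb 0 (tmul x1)" using lowb_tmul[OF x1(2)] by simp
    show ?thesis unfolding bform_interval[OF x1(2) lt] by (simp add: c_def tmul_def)
  qed
  ultimately have cc: "(\<Sum>a<n. c a * c a) = 0" by simp
  obtain c' where c': "(\<Sum>a<n. c a * c' a) = 1" "(\<Sum>a<n. c' a * c' a) = 0"
    using cprime_exists[OF cc a0] by blast
  define k where "k = kmat n c c' s"
  have kG: "k \<in> GL2 n" unfolding k_def by (rule kmat_GL2[OF c'(1) c'(2) cc])
  have kL: "is_Lmat n k" by (rule GL2_Lmat[OF kG])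
  have "hv.dim ((\<lambda>u. pp (act n k u)) ` X) < hv.dim (pp ` X)"
  proof (rule DL[where xo = x1 and T = "Bx n N"])
    show "hv.subspace X" by (rule lin_subspace_hv[OF sub])
    show "\<forall>u v. pp (u + v) = pp u + pp v" by (simp add: pp_add)
    show "\<forall>c u. pp (sc c u) = sc c (pp u)" by (simp add: pp_sc)
    show "\<forall>u\<in>X. \<forall>v\<in>X. pp (act n k (u + v)) = pp (act n k u) + pp (act n k v)"
      using act_add[OF kL XH XH] by (simp add: plus_hvec[symmetric] pp_add)
    show "\<forall>d. \<forall>u\<in>X. pp (act n k (sc d u)) = sc d (pp (act n k u))"
      using act_sc[OF kL XH] by (simp add: sc_def[symmetric] pp_sc)
    show "\<forall>z\<in>X. pp z = 0 \<longrightarrow> pp (act n k z) = 0"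
    proof (intro ballI impI)
      fix z assume z: "z \<in> X" "pp z = 0"
      then have zl: "lowb 0 z" using pp_zero_iff by blast
      have "bform n z x1 = 0" using iso z(1) x1(1) by blast
      moreover have "bform n z x1 = \<i> * (- (\<Sum>e<n. c e * z e 0))"
        unfolding bform_interval[OF zl x1(2)] by (simp add: c_def sum_negf mult.commute)
      ultimately have cz: "(\<Sum>e<n. c e * z e 0) = 0" by simp
      show "pp (act n k z) = 0" unfolding k_def pp_zero_iff by (rule kact_z[OF zl cz])
    qed
    show "x1 \<in> X" by (rule x1(1))
    show "pp (act n k x1) = 0" unfolding k_def pp_zero_iff
      by (rule kact_x1[OF x1(2) _ s_def cc c'(1)]) (simp add: c_def)
    show "pp x1 \<noteq> 0" by (rule x1(3))
    show "pp ` X \<subseteq> hv.span (Bx n N)" using pp_span XH N by blast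
    show "finite (Bx n N)" by (rule Bx_finite)
  qed
  moreover have "(\<lambda>u. pp (act n k u)) ` X = pp ` act n k ` X" by (simp add: image_image)
  ultimately show ?thesis using kG by auto
qed

lemma Lag_orbit: "Lag n X \<Longrightarrow> \<exists>g\<in>GL2 n. X = act n g ` Hsub n 0"
proof (induction "hv.dim (pp ` X)" arbitrary: X rule: less_induct)
  case less
  show ?case
  proof (cases "\<exists>u\<in>X. pp u \<noteq> 0")
    case True
    obtain k where k: "k \<in> GL2 n" "hv.dim (pp ` act n k ` X) < hv.dim (pp ` X)"
      using Lag_step[OF less.prems True] by blast
    have LY: "Lag n (act n k ` X)" by (rule Lag_act[OF less.prems k(1)])
    obtain g' where g': "g' \<in> GL2 n" "act n k ` X = act n g' ` Hsub n 0"
      using less.hyps[OF k(2) LY] by blast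
    have kL: "is_Lmat n k" by (rule GL2_Lmat[OF k(1)])
    have g'L: "is_Lmat n g'" by (rule GL2_Lmat[OF g'(1)])
    have XH: "\<And>u. u \<in> X \<Longrightarrow> in_H n u" using Lag_parts(1)[OF less.prems] unfolding lin_subspace_def by auto
    have H0H: "\<And>u. u \<in> Hsub n 0 \<Longrightarrow> in_H n u" using Hsub0_iff by blast
    have "X = act n (minv k) ` act n k ` X"
    proof
      show "X \<subseteq> act n (minv k) ` act n k ` X"
      proof
        fix u assume u: "u \<in> X"
        have "act n k u \<in> act n k ` X" using u by blast
        then have "act n (minv k) (act n k u) \<in> act n (minv k) ` act n k ` X" by blast
        then show "u \<in> act n (minv k) ` act n k ` X" using act_inv(2)[OF k(1) XH[OF u]] by simp
      qed
      show "act n (minv k) ` act n k ` X \<subseteq> X"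
      proof
        fix w assume "w \<in> act n (minv k) ` act n k ` X"
        then obtain u where u: "u \<in> X" "w = act n (minv k) (act n k u)" by blast
        then show "w \<in> X" using act_inv(2)[OF k(1) XH[OF u(1)]] by simp
      qed
    qed
    also have "\<dots> = act n (minv k) ` act n g' ` Hsub n 0" using g'(2) by simp
    also have "\<dots> = act n (mat_mult n (minv k) g') ` Hsub n 0"
      unfolding image_image using act_mult[OF Lmat_minv[OF kL] g'L H0H] by (intro image_cong) auto
    finally show ?thesis using GL2_mult[OF GL2_minv[OF k(1)] g'(1)] by blast
  next
    case False
    then have "X = Hsub n 0" using Lag_base[OF less.prems] by blast
    moreover have "act n (mat_one n) ` Hsub n 0 = Hsub n 0"
    proof -
      have "act n (mat_one n) ` Hsub n 0 = id ` Hsub n 0"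
        using act_one Hsub0_iff by (intro image_cong) auto
      then show ?thesis by simp
    qed
    ultimately show ?thesis using GL2_one by blast
  qed
qed

lemma Hsub_mult:
  assumes n: "1 \<le> n"
  shows "u \<in> Hsub n (- (int n * M)) \<longleftrightarrow> in_H n u \<and> lowb M u"
proof -
  have key: "(- (int n * M) < vidx n a k) \<longleftrightarrow> k < M" if a: "a < n" for a k
  proof
    assume "k < M"
    then have "int n * (k + 1) \<le> int n * M" by (intro mult_left_mono) auto
    then show "- (int n * M) < vidx n a k" unfolding vidx_def by (simp add: algebra_simps)
  next
    assume h: "- (int n * M) < vidx n a k"
    show "k < M"
    proof (rule ccontr)
      assume "\<not> k < M"
      then have 1: "int n * M \<le> int n * k" by (intro mult_left_mono) auto
      have 2: "int a + 1 \<le> int n" using a by simp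
      have 3: "int n * (k + 1) = int n * k + int n" by (simp add: algebra_simps)
      have 4: "- (int n * M) < - (int n * (k + 1)) + int a + 1" using h unfolding vidx_def by simp
      show False using 1 2 3 4 by linarith
    qed
  qed
  show ?thesis
  proof
    assume u: "u \<in> Hsub n (- (int n * M))"
    then have "in_H n u" unfolding Hsub_def by simp
    moreover have "lowb M u" unfolding lowb_def
    proof (intro allI impI)
      fix a k assume k: "k < M"
      show "u a k = 0"
      proof (cases "a < n")
        case True then show ?thesis using u key[OF True] k unfolding Hsub_def by auto
      next
        case False then show ?thesis using \<open>in_H n u\<close> unfolding in_H_def by simp
      qed
    qed
    ultimately show "in_H n u \<and> lowb M u" by simp
  next
    assume "in_H n u \<and> lowb M u"
    then show "u \<in> Hsub n (- (int n * M))" unfolding Hsub_def lowb_def using key by auto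
  qed
qed

lemma Hsub_mono: "J \<le> J' \<Longrightarrow> Hsub n J \<subseteq> Hsub n J'"
  unfolding Hsub_def by auto

lemma div_bounds:
  fixes x b lo hi :: int
  assumes b: "0 < b" and "lo * b \<le> x" "x < hi * b"
  shows "lo \<le> x div b \<and> x div b < hi"
proof -
  have e: "x = (x div b) * b + x mod b" by simp
  have r: "0 \<le> x mod b" "x mod b < b" using b by simp_all
  have 1: "x div b < hi"
  proof (rule ccontr)
    assume "\<not> x div b < hi"
    then have "hi * b \<le> (x div b) * b" using b by (intro mult_right_mono) auto
    then show False using e r assms(3) by linarith
  qed
  have 2: "lo \<le> x div b"
  proof (rule ccontr)
    assume "\<not> lo \<le> x div b"
    then have "(x div b) * b \<le> (lo - 1) * b" using b by (intro mult_right_mono) auto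
    moreover have "(lo - 1) * b = lo * b - b" by (simp add: algebra_simps)
    ultimately show False using e r assms(2) by linarith
  qed
  show ?thesis using 1 2 by simp
qed

definition idx :: "nat \<Rightarrow> int \<Rightarrow> nat \<times> int" where
  "idx n m = (nat ((m - 1) mod int n), - ((m - 1) div int n) - 1)"

lemma vidx_idx: "1 \<le> n \<Longrightarrow> vidx n (fst (idx n m)) (snd (idx n m)) = m"
  unfolding vidx_def idx_def
  by (simp add: algebra_simps)

lemma vidx_inj:
  assumes "a < n" "a' < n" "vidx n a k = vidx n a' k'"
  shows "a = a' \<and> k = k'"
proof -
  have e: "int n * (k' - k) = int a' - int a" using assms(3) unfolding vidx_def by (simp add: algebra_simps)
  have "k = k'"
  proof (rule ccontr)
    assume "k \<noteq> k'"
    then have "\<bar>k' - k\<bar> \<ge> 1" by simp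
    then have "\<bar>int n * (k' - k)\<bar> \<ge> int n" by (simp add: abs_mult mult_le_cancel_left1)
    moreover have "\<bar>int a' - int a\<bar> < int n" using assms(1,2) by simp
    ultimately show False using e by simp
  qed
  then show ?thesis using e by simp
qed

lemma vidx_bij:
  assumes n: "1 \<le> n" and N: "0 \<le> N"
  shows "bij_betw (\<lambda>(a, k). vidx n a k) ({..<n} \<times> {-N..<N}) {- (int n * N)<..int n * N}"
proof -
  have inj: "inj_on (\<lambda>(a, k). vidx n a k) ({..<n} \<times> {-N..<N})"
    by (auto simp: inj_on_def dest: vidx_inj)
  have "(\<lambda>(a, k). vidx n a k) ` ({..<n} \<times> {-N..<N}) = {- (int n * N)<..int n * N}"
  proof
    show "(\<lambda>(a, k). vidx n a k) ` ({..<n} \<times> {-N..<N}) \<subseteq> {- (int n * N)<..int n * N}"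
    proof
      fix x assume "x \<in> (\<lambda>(a, k). vidx n a k) ` ({..<n} \<times> {-N..<N})"
      then obtain a k where ak: "a < n" "-N \<le> k" "k < N" "x = vidx n a k" by auto
      have 1: "int n * (k + 1) \<le> int n * N" using ak by (intro mult_left_mono) auto
      have 2: "int n * (1 - N) \<le> int n * (k + 1)" using ak by (intro mult_left_mono) auto
      have 3: "int a + 1 \<le> int n" using ak by simp
      have 4: "int n * (1 - N) = int n - int n * N" by (simp add: algebra_simps)
      have 5: "x = - (int n * (k + 1)) + int a + 1" unfolding ak(4) vidx_def by simp
      show "x \<in> {- (int n * N)<..int n * N}"
        unfolding greaterThanAtMost_iff using 1 2 3 4 5 by linarith
    qed
    show "{- (int n * N)<..int n * N} \<subseteq> (\<lambda>(a, k). vidx n a k) ` ({..<n} \<times> {-N..<N})"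
    proof
      fix m assume m: "m \<in> {- (int n * N)<..int n * N}"
      define d where "d = (m - 1) div int n"
      have np: "0 < int n" using n by simp
      have "-N \<le> d \<and> d < N" unfolding d_def
        by (rule div_bounds[OF np]) (use m in \<open>auto simp: mult.commute\<close>)
      then have "snd (idx n m) \<in> {-N..<N}" unfolding idx_def d_def by simp
      moreover have "fst (idx n m) < n" unfolding idx_def using np
        by (simp add: nat_less_iff)
      ultimately have "idx n m \<in> {..<n} \<times> {-N..<N}" by (simp add: mem_Times_iff)
      moreover have "m = (\<lambda>(a, k). vidx n a k) (idx n m)" using vidx_idx[OF n, of m]
        by (simp add: case_prod_beta)
      ultimately show "m \<in> (\<lambda>(a, k). vidx n a k) ` ({..<n} \<times> {-N..<N})" by (rule rev_image_eqI)
    qed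
  qed
  then show ?thesis unfolding bij_betw_def using inj by blast
qed

lemma vidx_count:
  assumes n: "1 \<le> n" and N: "0 \<le> N" and J: "- (int n * N) \<le> J" "J \<le> int n * N"
  shows "card {ak \<in> {..<n} \<times> {-N..<N}. (\<lambda>(a, k). vidx n a k) ak \<le> J} = nat (J + int n * N)"
proof -
  let ?f = "\<lambda>(a, k). vidx n a k"
  have b: "bij_betw ?f ({..<n} \<times> {-N..<N}) {- (int n * N)<..int n * N}" by (rule vidx_bij[OF n N])
  have "bij_betw ?f {ak \<in> {..<n} \<times> {-N..<N}. ?f ak \<le> J} {- (int n * N)<..J}"
  proof -
    have S: "?f ` ({..<n} \<times> {-N..<N}) = {- (int n * N)<..int n * N}" using bij_betw_imp_surj_on[OF b] .
    have "?f ` {ak \<in> {..<n} \<times> {-N..<N}. ?f ak \<le> J} = {m \<in> {- (int n * N)<..int n * N}. m \<le> J}"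
    proof
      show "?f ` {ak \<in> {..<n} \<times> {-N..<N}. ?f ak \<le> J} \<subseteq> {m \<in> {- (int n * N)<..int n * N}. m \<le> J}"
        using S by auto
      show "{m \<in> {- (int n * N)<..int n * N}. m \<le> J} \<subseteq> ?f ` {ak \<in> {..<n} \<times> {-N..<N}. ?f ak \<le> J}"
      proof
        fix x assume x: "x \<in> {m \<in> {- (int n * N)<..int n * N}. m \<le> J}"
        then have "x \<in> ?f ` ({..<n} \<times> {-N..<N})" using S by auto
        then obtain ak where ak: "ak \<in> {..<n} \<times> {-N..<N}" "x = ?f ak" by blast
        then show "x \<in> ?f ` {ak \<in> {..<n} \<times> {-N..<N}. ?f ak \<le> J}" using x by blast
      qed
    qed
    also have "\<dots> = {- (int n * N)<..J}" using J by auto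
    finally show ?thesis using bij_betw_subset[OF b, of "{ak \<in> {..<n} \<times> {-N..<N}. ?f ak \<le> J}"]
      by auto
  qed
  then have "card {ak \<in> {..<n} \<times> {-N..<N}. ?f ak \<le> J} = card {- (int n * N)<..J}"
    by (rule bij_betw_same_card)
  then show ?thesis by simp
qed

lemma in_H_plus: "in_H n u \<Longrightarrow> in_H n v \<Longrightarrow> in_H n (u + v)"
  unfolding plus_hvec by (rule in_H_add)
lemma in_H_scv: "in_H n u \<Longrightarrow> in_H n (sc c u)"
  unfolding sc_def by (rule in_H_sc)
lemma in_H_0: "in_H n 0"
  unfolding zero_hvec by (rule in_H_zero)
lemma in_H_sum: "(\<And>x. x \<in> A \<Longrightarrow> in_H n (f x)) \<Longrightarrow> in_H n (\<Sum>x\<in>A. f x)"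
  by (induction A rule: infinite_finite_induct) (auto simp: in_H_0 in_H_plus)
lemma in_H_minus: "in_H n u \<Longrightarrow> in_H n v \<Longrightarrow> in_H n (u - v)"
proof -
  assume "in_H n u" "in_H n v"
  then have "in_H n (u + sc (-1) v)" by (intro in_H_plus in_H_scv)
  moreover have "u + sc (-1) v = u - v" by (simp add: sc_def fun_eq_iff)
  ultimately show ?thesis by simp
qed

lemma bform_plus2: "in_H n u \<Longrightarrow> in_H n v \<Longrightarrow> in_H n w \<Longrightarrow> bform n w (u + v) = bform n w u + bform n w v"
  unfolding plus_hvec by (rule bform_add2)
lemma bform_plus1: "in_H n u \<Longrightarrow> in_H n v \<Longrightarrow> in_H n w \<Longrightarrow> bform n (u + v) w = bform n u w + bform n v w"
  unfolding plus_hvec by (rule bform_add1)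
lemma bform_scv2: "in_H n u \<Longrightarrow> in_H n w \<Longrightarrow> bform n w (sc c u) = c * bform n w u"
  unfolding sc_def by (rule bform_sc2)
lemma bform_scv1: "in_H n u \<Longrightarrow> in_H n w \<Longrightarrow> bform n (sc c u) w = c * bform n u w"
  unfolding sc_def by (rule bform_sc1)
lemma bform_zero2: "bform n w (\<lambda>a k. 0) = 0"
  unfolding bform_def by simp
lemma bform_zero1: "bform n (\<lambda>a k. 0) w = 0"
  unfolding bform_def by simp
lemma bform_zero2': "bform n w 0 = 0"
  unfolding bform_def by simp
lemma bform_zero1': "bform n 0 w = 0"
  unfolding bform_def by simp
lemma bform_uminus2: "in_H n v \<Longrightarrow> in_H n w \<Longrightarrow> bform n w (- v) = - bform n w v"
proof -
  assume a: "in_H n v" "in_H n w"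
  have "- v = sc (-1) v" by (simp add: sc_def fun_eq_iff)
  then show ?thesis using bform_scv2[OF a, of "-1"] by simp
qed
lemma bform_uminus1: "in_H n v \<Longrightarrow> in_H n w \<Longrightarrow> bform n (- v) w = - bform n v w"
proof -
  assume a: "in_H n v" "in_H n w"
  have "- v = sc (-1) v" by (simp add: sc_def fun_eq_iff)
  then show ?thesis using bform_scv1[OF a, of "-1"] by simp
qed
lemma in_H_uminus: "in_H n v \<Longrightarrow> in_H n (- v)"
proof -
  assume a: "in_H n v"
  have "- v = sc (-1) v" by (simp add: sc_def fun_eq_iff)
  then show ?thesis using in_H_scv[OF a, of "-1"] by simp
qed
lemma bform_minus2: "in_H n u \<Longrightarrow> in_H n v \<Longrightarrow> in_H n w \<Longrightarrow> bform n w (u - v) = bform n w u - bform n w v"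
proof -
  assume a: "in_H n u" "in_H n v" "in_H n w"
  have eq: "u - v = u + (- v)" by simp
  show ?thesis unfolding eq using bform_plus2[OF a(1) in_H_uminus[OF a(2)] a(3)] bform_uminus2[OF a(2) a(3)]
    by simp
qed
lemma bform_minus1: "in_H n u \<Longrightarrow> in_H n v \<Longrightarrow> in_H n w \<Longrightarrow> bform n (u - v) w = bform n u w - bform n v w"
proof -
  assume a: "in_H n u" "in_H n v" "in_H n w"
  have eq: "u - v = u + (- v)" by simp
  show ?thesis unfolding eq using bform_plus1[OF a(1) in_H_uminus[OF a(2)] a(3)] bform_uminus1[OF a(2) a(3)]
    by simp
qed

lemma bform_sum2:
  assumes w: "in_H n w" and f: "\<And>x. x \<in> A \<Longrightarrow> in_H n (f x)"
  shows "bform n w (\<Sum>x\<in>A. f x) = (\<Sum>x\<in>A. bform n w (f x))"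
  using f
proof (induction A rule: infinite_finite_induct)
  case (infinite A) then show ?case by (simp add: bform_zero2 bform_zero2')
next
  case empty then show ?case by (simp add: bform_zero2 bform_zero2')
next
  case (insert x F)
  have fF: "\<And>y. y \<in> F \<Longrightarrow> in_H n (f y)" using insert.prems by blast
  have "bform n w (\<Sum>x\<in>insert x F. f x) = bform n w (f x + (\<Sum>x\<in>F. f x))"
    by (simp only: sum.insert[OF insert.hyps])
  also have "\<dots> = bform n w (f x) + bform n w (\<Sum>x\<in>F. f x)"
    by (rule bform_plus2[OF _ in_H_sum[OF fF] w]) (use insert.prems in blast)
  also have "\<dots> = bform n w (f x) + (\<Sum>x\<in>F. bform n w (f x))" by (simp only: insert.IH[OF fF])
  also have "\<dots> = (\<Sum>x\<in>insert x F. bform n w (f x))" by (simp only: sum.insert[OF insert.hyps])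
  finally show ?case .
qed

lemma bform_sum1:
  assumes w: "in_H n w" and f: "\<And>x. x \<in> A \<Longrightarrow> in_H n (f x)"
  shows "bform n (\<Sum>x\<in>A. f x) w = (\<Sum>x\<in>A. bform n (f x) w)"
  using f
proof (induction A rule: infinite_finite_induct)
  case (infinite A) then show ?case by (simp add: bform_zero1 bform_zero1')
next
  case empty then show ?case by (simp add: bform_zero1 bform_zero1')
next
  case (insert x F)
  have fF: "\<And>y. y \<in> F \<Longrightarrow> in_H n (f y)" using insert.prems by blast
  have "bform n (\<Sum>x\<in>insert x F. f x) w = bform n (f x + (\<Sum>x\<in>F. f x)) w"
    by (simp only: sum.insert[OF insert.hyps])
  also have "\<dots> = bform n (f x) w + bform n (\<Sum>x\<in>F. f x) w"
    by (rule bform_plus1[OF _ in_H_sum[OF fF] w]) (use insert.prems in blast)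
  also have "\<dots> = bform n (f x) w + (\<Sum>x\<in>F. bform n (f x) w)" by (simp only: insert.IH[OF fF])
  also have "\<dots> = (\<Sum>x\<in>insert x F. bform n (f x) w)" by (simp only: sum.insert[OF insert.hyps])
  finally show ?case .
qed

definition BoxS :: "nat \<Rightarrow> nat \<Rightarrow> hvec set" where
  "BoxS n N = {u. in_H n u \<and> lowb (- int N) u \<and> (\<forall>a k. int N \<le> k \<longrightarrow> u a k = 0)}"

definition Unt :: "nat \<Rightarrow> nat \<Rightarrow> hvec set" where
  "Unt n N = (\<lambda>(a, k). E a k) ` ({..<n} \<times> {- int N..<int N})"

lemma BoxS_sub: "hv.subspace (BoxS n N)"
  unfolding hv.subspace_def BoxS_def
  by (auto simp: in_H_plus in_H_scv in_H_0 lowb_def sc_def in_H_sc in_H_zero)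

lemma BoxS_H: "u \<in> BoxS n N \<Longrightarrow> in_H n u"
  unfolding BoxS_def by simp

lemma Un_Box: "Unt n N \<subseteq> BoxS n N"
proof
  fix u assume "u \<in> Unt n N"
  then obtain a k where ak: "a < n" "- int N \<le> k" "k < int N" "u = E a k" unfolding Unt_def by auto
  have "in_H n u" using in_H_E[OF ak(1)] ak(4) by simp
  moreover have "lowb (- int N) u \<and> (\<forall>a k. int N \<le> k \<longrightarrow> u a k = 0)"
    using ak unfolding lowb_def E_def by auto
  ultimately show "u \<in> BoxS n N" unfolding BoxS_def by simp
qed

lemma Box_span: "BoxS n N \<subseteq> hv.span (Unt n N)"
proof
  fix u assume u: "u \<in> BoxS n N"
  have eq: "u = (\<Sum>ak\<in>{..<n} \<times> {- int N..<int N}. sc (u (fst ak) (snd ak)) (E (fst ak) (snd ak)))"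
  proof (intro ext)
    fix a k
    have "(\<Sum>ak\<in>{..<n} \<times> {- int N..<int N}. sc (u (fst ak) (snd ak)) (E (fst ak) (snd ak))) a k
       = (\<Sum>ak\<in>{..<n} \<times> {- int N..<int N}. (if ak = (a, k) then u a k else 0))"
      unfolding sum_hvec by (intro sum.cong refl) (auto simp: sc_def E_def)
    also have "\<dots> = (if (a, k) \<in> {..<n} \<times> {- int N..<int N} then u a k else 0)"
      by (simp add: sum.delta')
    also have "\<dots> = u a k"
      using u unfolding BoxS_def in_H_def lowb_def by (auto simp: not_less)
    finally show "u a k = (\<Sum>ak\<in>{..<n} \<times> {- int N..<int N}. sc (u (fst ak) (snd ak)) (E (fst ak) (snd ak))) a k" by simp
  qed
  show "u \<in> hv.span (Unt n N)" unfolding Unt_def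
    by (subst eq, intro hv.span_sum hv.span_scale hv.span_base) (auto intro: image_eqI)
qed

lemma E_inj: "E a k = E a' k' \<Longrightarrow> a = a' \<and> k = k'"
  unfolding E_def by (metis (full_types) zero_neq_one)

lemma Un_card: "card (Unt n N) = 2 * n * N"
proof -
  have "inj_on (\<lambda>(a, k). E a k) ({..<n} \<times> {- int N..<int N})"
    by (auto simp: inj_on_def dest: E_inj)
  then have "card (Unt n N) = card ({..<n} \<times> {- int N..<int N})" unfolding Unt_def by (rule card_image)
  also have "\<dots> = n * (2 * N)" by (auto simp: card_cartesian_product nat_mult_distrib)
  finally show ?thesis by simp
qed

lemma Un_finite: "finite (Unt n N)" unfolding Unt_def by simp

lemma Un_indep: "hv.independent (Unt n N)"
proof -
  have "\<not> hv.dependent (Unt n N)"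
  proof
    assume "hv.dependent (Unt n N)"
    then obtain c v where v: "v \<in> Unt n N" "c v \<noteq> 0" and s: "(\<Sum>v\<in>Unt n N. sc (c v) v) = 0"
      using hv.dependent_finite[OF Un_finite] by blast
    obtain a k where ak: "v = E a k" using v(1) unfolding Unt_def by auto
    have "(\<Sum>w\<in>Unt n N. sc (c w) w) a k = (\<Sum>w\<in>Unt n N. if w = v then c w else 0)"
      unfolding sum_hvec
    proof (intro sum.cong refl)
      fix w assume "w \<in> Unt n N"
      then obtain a' k' where w: "w = E a' k'" unfolding Unt_def by auto
      show "sc (c w) w a k = (if w = v then c w else 0)"
      proof (cases "a' = a \<and> k' = k")
        case True then show ?thesis using ak w by (simp add: sc_def E_def)
      next
        case False
        then have "w \<noteq> v" using ak w E_inj by blast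
        moreover have "w a k = 0" using False w unfolding E_def by auto
        ultimately show ?thesis by (simp add: sc_def)
      qed
    qed
    also have "\<dots> = c v" using v(1) Un_finite by simp
    finally show False using s v(2) by (simp add: zero_hvec)
  qed
  then show ?thesis by simp
qed

lemma Box_nondeg:
  assumes r: "r \<in> BoxS n N" "r \<noteq> 0"
  shows "\<exists>z\<in>Unt n N. bform n r z \<noteq> 0"
proof -
  obtain a k where ak: "r a k \<noteq> 0" using r(2) by (auto simp: fun_eq_iff)
  have rH: "in_H n r" using r(1) BoxS_H by blast
  have a: "a < n" using ak rH unfolding in_H_def by (meson not_le)
  have "\<not> k < - int N" "\<not> int N \<le> k" using ak r(1) unfolding BoxS_def lowb_def by blast+
  then have k: "- int N \<le> k" "k < int N" by linarith+
  have z: "E a (-1 - k) \<in> Unt n N" unfolding Unt_def using a k by (auto intro!: image_eqI[of _ _ "(a, -1-k)"])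
  have "bform n r (E a (-1 - k)) = - bform n (E a (-1 - k)) r"
    using bform_skew[OF in_H_E[OF a] rH] by simp
  also have "\<dots> = - (\<i> * ((-1) powi k * r a k))" using bform_E[OF a rH, of "-1-k"] by simp
  finally have "bform n r (E a (-1 - k)) \<noteq> 0" using ak by simp
  then show ?thesis using z by blast
qed

lemma bform_lin2:
  assumes w: "in_H n w" and v: "\<And>a. a \<in> F \<Longrightarrow> in_H n (v a)"
  shows "bform n w (\<Sum>a\<in>F. sc (c a) (v a)) = (\<Sum>a\<in>F. c a * bform n w (v a))"
  using bform_sum2[OF w, of F "\<lambda>a. sc (c a) (v a)"] in_H_scv[OF v] bform_scv2[OF v w] by simp

lemma bform_lin1:
  assumes w: "in_H n w" and v: "\<And>a. a \<in> F \<Longrightarrow> in_H n (v a)"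
  shows "bform n (\<Sum>a\<in>F. sc (c a) (v a)) w = (\<Sum>a\<in>F. c a * bform n (v a) w)"
  using bform_sum1[OF w, of F "\<lambda>a. sc (c a) (v a)"] in_H_scv[OF v] bform_scv1[OF v w] by simp

lemma delta_sum: "finite F \<Longrightarrow> a \<in> F \<Longrightarrow> (\<Sum>a'\<in>F. g a' * (if a = a' then 1 else 0)) = (g a :: complex)"
proof -
  assume "finite F" "a \<in> F"
  moreover have "(\<Sum>a'\<in>F. g a' * (if a = a' then 1 else 0)) = (\<Sum>a'\<in>F. if a = a' then g a' else 0)"
    by (intro sum.cong refl) auto
  ultimately show ?thesis by simp
qed

lemma Box_sum: "(\<And>a. a \<in> F \<Longrightarrow> v a \<in> BoxS n N) \<Longrightarrow> (\<Sum>a\<in>F. sc (c a) (v a)) \<in> BoxS n N"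
  by (intro hv.subspace_sum[OF BoxS_sub] hv.subspace_scale[OF BoxS_sub])

lemma DS:
  assumes "finite A" "hv.independent A" "A \<subseteq> BoxS n N"
  shows "\<exists>y. (\<forall>a\<in>A. y a \<in> BoxS n N) \<and> (\<forall>a\<in>A. \<forall>a'\<in>A. bform n a (y a') = (if a = a' then 1 else 0))"
  using assms
proof (induction A rule: finite_induct)
  case empty then show ?case by simp
next
  case (insert x F)
  have indF: "hv.independent F" and xF: "x \<notin> hv.span F"
    using insert.prems(1) insert.hyps(2) hv.independent_insert by auto
  obtain y where yB: "\<forall>a\<in>F. y a \<in> BoxS n N"
    and yd: "\<forall>a\<in>F. \<forall>a'\<in>F. bform n a (y a') = (if a = a' then 1 else 0)"
    using insert.IH[OF indF] insert.prems(2) by blast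
  have xB: "x \<in> BoxS n N" using insert.prems(2) by blast
  have FB: "\<And>a. a \<in> F \<Longrightarrow> a \<in> BoxS n N" using insert.prems(2) by blast
  have H: "\<And>u. u \<in> BoxS n N \<Longrightarrow> in_H n u" by (rule BoxS_H)
  have yH: "\<And>a. a \<in> F \<Longrightarrow> in_H n (y a)" using yB H by blast
  have FH: "\<And>a. a \<in> F \<Longrightarrow> in_H n a" using FB H by blast
  define r where "r = x - (\<Sum>a\<in>F. sc (bform n x (y a)) a)"
  have rB: "r \<in> BoxS n N" unfolding r_def
    by (rule hv.subspace_diff[OF BoxS_sub xB Box_sum[OF FB]])
  have r0: "r \<noteq> 0"
  proof
    assume "r = 0"
    then have "x = (\<Sum>a\<in>F. sc (bform n x (y a)) a)" unfolding r_def by simp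
    moreover have "(\<Sum>a\<in>F. sc (bform n x (y a)) a) \<in> hv.span F"
      by (intro hv.span_sum hv.span_scale hv.span_base)
    ultimately show False using xF by simp
  qed
  obtain z where z: "z \<in> Unt n N" "bform n r z \<noteq> 0" using Box_nondeg[OF rB r0] by blast
  have zB: "z \<in> BoxS n N" using z(1) Un_Box by blast
  define z' where "z' = z - (\<Sum>a\<in>F. sc (bform n a z) (y a))"
  have z'B: "z' \<in> BoxS n N" unfolding z'_def
    by (rule hv.subspace_diff[OF BoxS_sub zB Box_sum[OF yB[rule_format]]])
  have Fz': "bform n a z' = 0" if a: "a \<in> F" for a
  proof -
    have 1: "bform n a z' = bform n a z - bform n a (\<Sum>a'\<in>F. sc (bform n a' z) (y a'))"
      unfolding z'_def by (rule bform_minus2[OF H[OF zB] in_H_sum FH[OF a]]) (rule in_H_scv[OF yH])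
    have 2: "bform n a (\<Sum>a'\<in>F. sc (bform n a' z) (y a')) = (\<Sum>a'\<in>F. bform n a' z * bform n a (y a'))"
      by (rule bform_lin2[OF FH[OF a] yH])
    have "bform n a z' = bform n a z - (\<Sum>a'\<in>F. bform n a' z * bform n a (y a'))"
      using 1 2 by simp
    also have "\<dots> = 0" using yd a delta_sum[OF insert.hyps(1) a, of "\<lambda>a'. bform n a' z"] by simp
    finally show ?thesis .
  qed
  have ry: "bform n r (y a) = 0" if a: "a \<in> F" for a
  proof -
    have 1: "bform n r (y a) = bform n x (y a) - bform n (\<Sum>a'\<in>F. sc (bform n x (y a')) a') (y a)"
      unfolding r_def by (rule bform_minus1[OF H[OF xB] in_H_sum yH[OF a]]) (rule in_H_scv[OF FH])
    have 2: "bform n (\<Sum>a'\<in>F. sc (bform n x (y a')) a') (y a) = (\<Sum>a'\<in>F. bform n x (y a') * bform n a' (y a))"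
      by (rule bform_lin1[OF yH[OF a] FH])
    have "bform n r (y a) = bform n x (y a) - (\<Sum>a'\<in>F. bform n x (y a') * bform n a' (y a))"
      using 1 2 by simp
    also have "(\<Sum>a'\<in>F. bform n x (y a') * bform n a' (y a)) = (\<Sum>a'\<in>F. bform n x (y a') * (if a = a' then 1 else 0))"
      using yd a by (intro sum.cong refl) auto
    also have "\<dots> = bform n x (y a)" by (rule delta_sum[OF insert.hyps(1) a])
    finally show ?thesis by simp
  qed
  define be where "be = bform n x z'"
  have "bform n r z' = bform n r z"
  proof -
    have 1: "bform n r z' = bform n r z - bform n r (\<Sum>a\<in>F. sc (bform n a z) (y a))"
      unfolding z'_def by (rule bform_minus2[OF H[OF zB] in_H_sum H[OF rB]]) (rule in_H_scv[OF yH])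
    have 2: "bform n r (\<Sum>a\<in>F. sc (bform n a z) (y a)) = (\<Sum>a\<in>F. bform n a z * bform n r (y a))"
      by (rule bform_lin2[OF H[OF rB] yH])
    have "bform n r z' = bform n r z - (\<Sum>a\<in>F. bform n a z * bform n r (y a))"
      using 1 2 by simp
    then show ?thesis using ry by simp
  qed
  moreover have "be = bform n r z'"
  proof -
    have 1: "bform n r z' = bform n x z' - bform n (\<Sum>a\<in>F. sc (bform n x (y a)) a) z'"
      unfolding r_def by (rule bform_minus1[OF H[OF xB] in_H_sum H[OF z'B]]) (rule in_H_scv[OF FH])
    have 2: "bform n (\<Sum>a\<in>F. sc (bform n x (y a)) a) z' = (\<Sum>a\<in>F. bform n x (y a) * bform n a z')"
      by (rule bform_lin1[OF H[OF z'B] FH])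
    have "bform n r z' = be - (\<Sum>a\<in>F. bform n x (y a) * bform n a z')"
      using 1 2 unfolding be_def by simp
    then show ?thesis using Fz' by simp
  qed
  ultimately have be0: "be \<noteq> 0" using z(2) by simp
  define yx where "yx = sc (1 / be) z'"
  have yxB: "yx \<in> BoxS n N" unfolding yx_def by (rule hv.subspace_scale[OF BoxS_sub z'B])
  have xyx: "bform n x yx = 1" unfolding yx_def using bform_scv2[OF H[OF z'B] H[OF xB]] be0 be_def by simp
  have Fyx: "bform n a yx = 0" if "a \<in> F" for a
    unfolding yx_def using bform_scv2[OF H[OF z'B] FH[OF that]] Fz'[OF that] by simp
  define y' where "y' a = (if a = x then yx else y a - sc (bform n x (y a)) yx)" for a
  show ?case
  proof (intro exI[of _ y'] conjI ballI)
    fix a assume "a \<in> insert x F"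
    then show "y' a \<in> BoxS n N" unfolding y'_def using yxB yB
      by (auto intro: hv.subspace_diff[OF BoxS_sub] hv.subspace_scale[OF BoxS_sub])
  next
    fix a a' assume a: "a \<in> insert x F" and a': "a' \<in> insert x F"
    show "bform n a (y' a') = (if a = a' then 1 else 0)"
    proof (cases "a' = x")
      case True
      then show ?thesis using a xyx Fyx insert.hyps(2) unfolding y'_def by auto
    next
      case False
      then have a'F: "a' \<in> F" using a' by simp
      have "bform n a (y' a') = bform n a (y a') - bform n x (y a') * bform n a yx"
        unfolding y'_def using False bform_minus2[OF yH[OF a'F] in_H_scv[OF H[OF yxB]]] bform_scv2[OF H[OF yxB]]
          a FH H[OF xB] by auto
      then show ?thesis using a a'F yd xyx Fyx False insert.hyps(2) by auto
    qed
  qed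
qed

lemma CL:
  assumes fA: "finite A" and iA: "hv.independent A" and AB: "A \<subseteq> BoxS n N"
    and iso: "\<forall>u\<in>A. \<forall>v\<in>A. bform n u v = 0"
  shows "card A \<le> n * N"
proof -
  obtain y where yB: "\<forall>a\<in>A. y a \<in> BoxS n N"
    and yd: "\<forall>a\<in>A. \<forall>a'\<in>A. bform n a (y a') = (if a = a' then 1 else 0)"
    using DS[OF fA iA AB] by blast
  have H: "\<And>u. u \<in> BoxS n N \<Longrightarrow> in_H n u" by (rule BoxS_H)
  have AH: "\<And>a. a \<in> A \<Longrightarrow> in_H n a" using AB H by blast
  have yH: "\<And>a. a \<in> A \<Longrightarrow> in_H n (y a)" using yB H by blast
  have inj: "inj_on y A"
  proof (rule inj_onI)
    fix a a' assume a: "a \<in> A" "a' \<in> A" "y a = y a'"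
    have "bform n a (y a') = bform n a (y a)" using a(3) by simp
    also have "\<dots> = 1" using yd a(1) by simp
    finally have "(if a = a' then 1 else 0) = (1::complex)" using yd a(1,2) by simp
    then show "a = a'" by (simp split: if_splits)
  qed
  have disj: "A \<inter> y ` A = {}"
  proof (rule ccontr)
    assume "A \<inter> y ` A \<noteq> {}"
    then obtain a where a: "a \<in> A" "y a \<in> A" by blast
    then have "bform n a (y a) = 0" using iso by blast
    moreover have "bform n a (y a) = 1" using yd a by auto
    ultimately show False by simp
  qed
  have fY: "finite (y ` A)" using fA by simp
  have indep: "hv.independent (A \<union> y ` A)"
  proof -
    have "\<not> hv.dependent (A \<union> y ` A)"
    proof
      assume "hv.dependent (A \<union> y ` A)"
      then obtain u v where v: "v \<in> A \<union> y ` A" "u v \<noteq> 0" and s: "(\<Sum>v\<in>A \<union> y ` A. sc (u v) v) = 0"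
        using hv.dependent_finite[of "A \<union> y ` A"] fA fY by blast
      have split: "(\<Sum>v\<in>A \<union> y ` A. sc (u v) v) = (\<Sum>v\<in>A. sc (u v) v) + (\<Sum>a\<in>A. sc (u (y a)) (y a))"
        by (simp only: sum.union_disjoint[OF fA fY disj] sum.reindex[OF inj] o_def)
      have uy: "u (y a) = 0" if a: "a \<in> A" for a
      proof -
        have "bform n a (\<Sum>v\<in>A \<union> y ` A. sc (u v) v) = 0"
          using s bform_zero2' by simp
        moreover have "bform n a (\<Sum>v\<in>A \<union> y ` A. sc (u v) v)
            = bform n a (\<Sum>v\<in>A. sc (u v) v) + bform n a (\<Sum>a\<in>A. sc (u (y a)) (y a))"
        proof -
          have h1: "in_H n (\<Sum>v\<in>A. sc (u v) v)" by (rule in_H_sum, rule in_H_scv, rule AH, assumption)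
          have h2: "in_H n (\<Sum>a\<in>A. sc (u (y a)) (y a))" by (rule in_H_sum, rule in_H_scv, rule yH, assumption)
          show ?thesis unfolding split by (rule bform_plus2[OF h1 h2 AH[OF a]])
        qed
        moreover have "bform n a (\<Sum>v\<in>A. sc (u v) v) = 0"
        proof -
          have "bform n a (\<Sum>v\<in>A. sc (u v) v) = (\<Sum>v\<in>A. u v * bform n a v)"
            by (rule bform_lin2[OF AH[OF a] AH])
          then show ?thesis using iso a by simp
        qed
        moreover have "bform n a (\<Sum>a\<in>A. sc (u (y a)) (y a)) = u (y a)"
        proof -
          have "bform n a (\<Sum>a'\<in>A. sc (u (y a')) (y a')) = (\<Sum>a'\<in>A. u (y a') * bform n a (y a'))"
            by (rule bform_lin2[OF AH[OF a] yH])
          also have "\<dots> = (\<Sum>a'\<in>A. u (y a') * (if a = a' then 1 else 0))"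
            using yd a by (intro sum.cong refl) auto
          also have "\<dots> = u (y a)" by (rule delta_sum[OF fA a])
          finally show ?thesis .
        qed
        ultimately show ?thesis by simp
      qed
      have "(\<Sum>a\<in>A. sc (u (y a)) (y a)) = 0"
        by (rule sum.neutral) (use uy in simp)
      then have sA: "(\<Sum>v\<in>A. sc (u v) v) = 0" using s split by simp
      have "\<forall>v\<in>A. u v = 0"
        using sA iA hv.dependent_finite[OF fA] by blast
      then show False using v uy by auto
    qed
    then show ?thesis by simp
  qed
  have "A \<union> y ` A \<subseteq> hv.span (Unt n N)" using AB yB Box_span by blast
  then have "card (A \<union> y ` A) \<le> card (Unt n N)"
    using hv.independent_span_bound[OF Un_finite indep] by blast
  moreover have "card (A \<union> y ` A) = card A + card A"
    using card_Un_disjoint[OF fA fY disj] card_image[OF inj] by simp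
  ultimately show ?thesis using Un_card by simp
qed

definition trc :: "nat \<Rightarrow> hvec \<Rightarrow> hvec" where
  "trc N w = (\<lambda>a k. if k < int N then w a k else 0)"

lemma trc_props:
  assumes w: "in_H n w" "lowb (- int N) w"
  shows "trc N w \<in> BoxS n N" "in_H n (w - trc N w)" "lowb (int N) (w - trc N w)"
    "w = trc N w + (w - trc N w)"
proof -
  obtain M where M: "\<forall>a k. k < M \<longrightarrow> w a k = 0" using w(1) unfolding in_H_def by blast
  have "in_H n (trc N w)" using w(1) M unfolding in_H_def trc_def by auto
  then show "trc N w \<in> BoxS n N" using w(2) unfolding BoxS_def lowb_def trc_def by auto
  show "in_H n (w - trc N w)" using w(1) M unfolding in_H_def trc_def by auto
  show "lowb (int N) (w - trc N w)" unfolding lowb_def trc_def by auto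
  show "w = trc N w + (w - trc N w)" by simp
qed

lemma LB:
  assumes sub: "lin_subspace n W"
    and big: "\<forall>v. in_H n v \<and> lowb (int N) v \<longrightarrow> v \<in> W"
    and small: "\<forall>w\<in>W. lowb (- int N) w"
    and co: "\<forall>v. in_H n v \<and> (\<forall>u\<in>W. bform n u v = 0) \<longrightarrow> v \<in> W"
    and fA: "finite A" and iA: "hv.independent A" and AS: "A \<subseteq> W \<inter> BoxS n N"
    and sp: "W \<inter> BoxS n N \<subseteq> hv.span A"
  shows "n * N \<le> card A"
proof (rule ccontr)
  assume less: "\<not> n * N \<le> card A"
  have H: "\<And>u. u \<in> BoxS n N \<Longrightarrow> in_H n u" by (rule BoxS_H)
  have AB: "A \<subseteq> BoxS n N" using AS by blast
  have AH: "\<And>a. a \<in> A \<Longrightarrow> in_H n a" using AB H by blast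
  have WH: "\<And>w. w \<in> W \<Longrightarrow> in_H n w" using sub unfolding lin_subspace_def by blast
  have subW: "hv.subspace W" by (rule lin_subspace_hv[OF sub])
  obtain y where yB: "\<forall>a\<in>A. y a \<in> BoxS n N"
    and yd: "\<forall>a\<in>A. \<forall>a'\<in>A. bform n a (y a') = (if a = a' then 1 else 0)"
    using DS[OF fA iA AB] by blast
  have yH: "\<And>a. a \<in> A \<Longrightarrow> in_H n (y a)" using yB H by blast
  define T where "T = A \<union> y ` A"
  have fT: "finite T" unfolding T_def using fA by simp
  have "card T \<le> card A + card (y ` A)" unfolding T_def by (rule card_Un_le)
  also have "\<dots> \<le> card A + card A" using card_image_le[OF fA, of y] by simp
  finally have cT: "card T < card (Unt n N)" using less Un_card by simp
  have "\<not> Unt n N \<subseteq> hv.span T"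
  proof
    assume "Unt n N \<subseteq> hv.span T"
    then have "card (Unt n N) \<le> card T" using hv.independent_span_bound[OF fT Un_indep] by blast
    then show False using cT by simp
  qed
  then obtain z where z: "z \<in> Unt n N" "z \<notin> hv.span T" by blast
  have zB: "z \<in> BoxS n N" using z(1) Un_Box by blast
  define z' where "z' = z - (\<Sum>a\<in>A. sc (bform n a z) (y a))"
  have z'B: "z' \<in> BoxS n N" unfolding z'_def
    by (rule hv.subspace_diff[OF BoxS_sub zB Box_sum[OF yB[rule_format]]])
  have Az': "bform n a z' = 0" if a: "a \<in> A" for a
  proof -
    have 1: "bform n a z' = bform n a z - bform n a (\<Sum>a'\<in>A. sc (bform n a' z) (y a'))"
      unfolding z'_def by (rule bform_minus2[OF H[OF zB] in_H_sum AH[OF a]]) (rule in_H_scv[OF yH])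
    have 2: "bform n a (\<Sum>a'\<in>A. sc (bform n a' z) (y a')) = (\<Sum>a'\<in>A. bform n a' z * bform n a (y a'))"
      by (rule bform_lin2[OF AH[OF a] yH])
    have 3: "(\<Sum>a'\<in>A. bform n a' z * bform n a (y a')) = bform n a z"
      using yd a delta_sum[OF fA a, of "\<lambda>a'. bform n a' z"] by simp
    show ?thesis using 1 2 3 by simp
  qed
  have "\<forall>w\<in>W. bform n w z' = 0"
  proof
    fix w assume w: "w \<in> W"
    have wl: "lowb (- int N) w" using small w by blast
    note tp = trc_props[OF WH[OF w] wl]
    have tailW: "w - trc N w \<in> W" using big tp(2,3) by blast
    have trW: "trc N w \<in> W" using hv.subspace_diff[OF subW w tailW] by simp
    have "trc N w \<in> hv.span A" using sp trW tp(1) by blast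
    then obtain c where c: "trc N w = (\<Sum>a\<in>A. sc (c a) a)" using hv.span_finite[OF fA] by auto
    have "bform n (trc N w) z' = (\<Sum>a\<in>A. c a * bform n a z')"
      unfolding c by (rule bform_lin1[OF H[OF z'B] AH])
    also have "\<dots> = 0" using Az' by simp
    finally have b1: "bform n (trc N w) z' = 0" .
    have b2: "bform n (w - trc N w) z' = 0"
      by (rule bform_low[OF tp(3), of "- int N"]) (use z'B in \<open>auto simp: BoxS_def\<close>)
    have "bform n w z' = bform n (trc N w) z' + bform n (w - trc N w) z'"
      by (subst tp(4)) (rule bform_plus1[OF H[OF tp(1)] tp(2) H[OF z'B]])
    then show "bform n w z' = 0" using b1 b2 by simp
  qed
  then have "z' \<in> W" using co H[OF z'B] by blast
  then have "z' \<in> hv.span A" using sp z'B by blast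
  then have "z' \<in> hv.span T" unfolding T_def by (rule set_rev_mp[OF _ hv.span_mono]) blast
  moreover have "(\<Sum>a\<in>A. sc (bform n a z) (y a)) \<in> hv.span T"
    unfolding T_def by (intro hv.span_sum hv.span_scale hv.span_base) blast
  ultimately have "z' + (\<Sum>a\<in>A. sc (bform n a z) (y a)) \<in> hv.span T" by (rule hv.span_add)
  then have "z \<in> hv.span T" unfolding z'_def by simp
  then show False using z(2) by simp
qed

lemma IND:
  fixes m :: nat
  assumes h: "\<forall>l. (\<Sum>i<m. sc (l i) (g i)) = 0 \<longrightarrow> (\<forall>i<m. l i = 0)"
  shows "inj_on g {..<m}" "hv.independent (g ` {..<m})"
proof -
  show inj: "inj_on g {..<m}"
  proof (rule inj_onI, rule ccontr)
    fix i j assume ij: "i \<in> {..<m}" "j \<in> {..<m}" "g i = g j" "i \<noteq> j"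
    define l where "l k = (if k = i then 1 else if k = j then -1 else (0::complex))" for k
    have "(\<Sum>k<m. sc (l k) (g k)) = (\<Sum>k<m. (if k = i then g i else 0) - (if k = j then g j else 0))"
      using ij(4) by (intro sum.cong refl) (auto simp: l_def ij(3) sc_def fun_eq_iff)
    also have "\<dots> = g i - g j" using ij(1,2) by (simp add: sum_subtractf)
    finally have "(\<Sum>k<m. sc (l k) (g k)) = 0" using ij(3) by simp
    then have "l i = 0" using h ij(1) by blast
    then show False unfolding l_def by simp
  qed
  show "hv.independent (g ` {..<m})"
  proof (rule hv.independent_if_scalars_zero)
    show "finite (g ` {..<m})" by simp
    fix f x assume s: "(\<Sum>x\<in>g ` {..<m}. sc (f x) x) = 0" and x: "x \<in> g ` {..<m}"
    have "(\<Sum>i<m. sc (f (g i)) (g i)) = 0" using s by (simp add: sum.reindex[OF inj])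
    then have "\<forall>i<m. f (g i) = 0" using h[rule_format, of "\<lambda>i. f (g i)"] by blast
    then show "f x = 0" using x by auto
  qed
qed

lemma qd_form: "(\<lambda>a k. w a k - (\<Sum>i<d. c i * f i a k)) = w - (\<Sum>i<d. sc (c i) (f i))"
  by (simp add: fun_eq_iff sum_hvec sc_def)

lemma E_Hsub:
  assumes n: "1 \<le> n" and a: "a < n" and j: "int N \<le> j"
  shows "E a j \<in> Hsub n (- (int n * int N))"
  unfolding Hsub_mult[OF n] using in_H_E[OF a] j by (auto simp: lowb_def E_def)

lemma perp_low:
  assumes n: "1 \<le> n" and sub: "Hsub n (- (int n * int N)) \<subseteq> W" and y: "in_H n y"
    and p: "\<forall>u\<in>W. bform n u y = 0"
  shows "lowb (- int N) y"
  unfolding lowb_def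
proof (intro allI impI)
  fix a k assume k: "k < - int N"
  show "y a k = 0"
  proof (cases "a < n")
    case True
    have "E a (-1 - k) \<in> W" using sub E_Hsub[OF n True, of N "-1-k"] k by auto
    then have "bform n (E a (-1 - k)) y = 0" using p by blast
    then show ?thesis using bform_E[OF True y, of "-1-k"] by simp
  next
    case False then show ?thesis using y unfolding in_H_def by simp
  qed
qed

lemma Hsub_subspace: "hv.subspace (Hsub n J)"
  unfolding hv.subspace_def Hsub_def
  by (auto simp: in_H_plus in_H_scv in_H_0 sc_def in_H_sc in_H_zero)

lemma gr2_Lag:
  assumes n: "1 \<le> n" and W: "W \<in> gr2 n"
  shows "Lag n W"
proof -
  have sub: "lin_subspace n W" and tm: "\<forall>u\<in>W. tmul u \<in> W" and iso: "\<forall>u\<in>W. \<forall>v\<in>W. bform n u v = 0"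
    using W unfolding gr2_def gr0_def Gr2_def Gr0_def by auto
  obtain J0 where J0: "J0 \<le> 0" "\<forall>J\<le>J0. Hsub n J \<subseteq> W \<and> quot_dim W (Hsub n J) (nat (- J))"
    using W unfolding gr2_def gr0_def Gr0_def by blast
  define N where "N = nat (- J0) + 1"
  define J where "J = - (int n * int N)"
  have "int N \<le> int n * int N" using mult_right_mono[of 1 "int n" "int N"] n by simp
  moreover have "int N = 1 - J0" using J0(1) unfolding N_def by simp
  ultimately have JJ0: "J \<le> J0" unfolding J_def by linarith
  have HW: "Hsub n J \<subseteq> W" and qd: "quot_dim W (Hsub n J) (nat (- J))" using J0(2) JJ0 by auto
  have natJ: "nat (- J) = n * N" unfolding J_def by (simp add: nat_mult_distrib)
  have WH: "\<And>w. w \<in> W \<Longrightarrow> in_H n w" using sub unfolding lin_subspace_def by blast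
  have subW: "hv.subspace W" by (rule lin_subspace_hv[OF sub])
  have subJ: "hv.subspace (Hsub n J)" by (rule Hsub_subspace)
  have small: "\<forall>w\<in>W. lowb (- int N) w"
  proof
    fix w assume w: "w \<in> W"
    show "lowb (- int N) w" by (rule perp_low[OF n HW[unfolded J_def] WH[OF w]]) (use iso w in blast)
  qed
  have co: "\<forall>v. in_H n v \<and> (\<forall>u\<in>W. bform n u v = 0) \<longrightarrow> v \<in> W"
  proof (intro allI impI)
    fix y assume y: "in_H n y \<and> (\<forall>u\<in>W. bform n u y = 0)"
    show "y \<in> W"
    proof (rule ccontr)
      assume yW: "y \<notin> W"
      have yl: "lowb (- int N) y" using perp_low[OF n HW[unfolded J_def]] y by blast
      obtain f where fW: "\<forall>i<n * N. f i \<in> W"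
        and uq: "\<forall>w\<in>W. \<exists>!c. (\<forall>i. n * N \<le> i \<longrightarrow> c i = 0) \<and> (\<lambda>a k. w a k - (\<Sum>i<n * N. c i * f i a k)) \<in> Hsub n J"
        using qd unfolding quot_dim_def natJ by blast
      define g where "g i = (if i < n * N then trc N (f i) else trc N y)" for i
      have tailJ: "w - trc N w \<in> Hsub n J" if "in_H n w" "lowb (- int N) w" for w
        using trc_props[OF that] unfolding J_def Hsub_mult[OF n] by blast
      have gW: "g i \<in> W" if "i < n * N" for i
      proof -
        have "f i \<in> W" using fW that by blast
        moreover have "f i - trc N (f i) \<in> W" using HW tailJ WH small \<open>f i \<in> W\<close> by blast
        ultimately have "f i - (f i - trc N (f i)) \<in> W" by (rule hv.subspace_diff[OF subW])
        then show ?thesis using that unfolding g_def by simp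
      qed
      have gB: "g i \<in> BoxS n N" for i
        unfolding g_def using trc_props(1) WH fW small y yl by auto
      have gH: "in_H n (g i)" for i using gB BoxS_H by blast
      have ytail: "y - trc N y \<in> W" using HW tailJ y yl by blast
      have indep: "\<forall>l. (\<Sum>i<Suc (n * N). sc (l i) (g i)) = 0 \<longrightarrow> (\<forall>i<Suc (n * N). l i = 0)"
      proof (rule allI, rule impI)
        fix l assume s0: "(\<Sum>i<Suc (n * N). sc (l i) (g i)) = 0"
        define S where "S = (\<Sum>i<n * N. sc (l i) (f i)) + sc (l (n * N)) y"
        have gs: "(\<Sum>i<Suc (n * N). sc (l i) (g i)) = (\<Sum>i<n * N. sc (l i) (trc N (f i))) + sc (l (n * N)) (trc N y)"
        proof -
          have "(\<Sum>i<Suc (n * N). sc (l i) (g i)) = (\<Sum>i<n * N. sc (l i) (g i)) + sc (l (n * N)) (g (n * N))"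
            by (rule sum.lessThan_Suc)
          moreover have "(\<Sum>i<n * N. sc (l i) (g i)) = (\<Sum>i<n * N. sc (l i) (trc N (f i)))"
            unfolding g_def by (intro sum.cong refl) auto
          moreover have "g (n * N) = trc N y" unfolding g_def by simp
          ultimately show ?thesis by simp
        qed
        have "S - (\<Sum>i<Suc (n * N). sc (l i) (g i))
            = ((\<Sum>i<n * N. sc (l i) (f i)) - (\<Sum>i<n * N. sc (l i) (trc N (f i)))) + (sc (l (n * N)) y - sc (l (n * N)) (trc N y))"
          unfolding S_def gs by (simp only: diff_add_eq add_diff_eq diff_diff_eq add.assoc add.commute add.left_commute)
        also have "\<dots> = (\<Sum>i<n * N. sc (l i) (f i - trc N (f i))) + sc (l (n * N)) (y - trc N y)"
          by (simp only: sum_subtractf[symmetric] hv.scale_right_diff_distrib)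
        also have "\<dots> \<in> Hsub n J"
          using tailJ WH fW small y yl
          by (intro hv.subspace_add[OF subJ] hv.subspace_sum[OF subJ] hv.subspace_scale[OF subJ]) auto
        finally have SJ: "S \<in> Hsub n J" using s0 by simp
        have ln: "l (n * N) = 0"
        proof (rule ccontr)
          assume ln0: "l (n * N) \<noteq> 0"
          have fs: "(\<Sum>i<n * N. sc (l i) (f i)) \<in> W"
            using fW by (intro hv.subspace_sum[OF subW] hv.subspace_scale[OF subW]) auto
          have "S - (\<Sum>i<n * N. sc (l i) (f i)) \<in> W" using HW SJ fs by (intro hv.subspace_diff[OF subW]) auto
          then have "sc (1 / l (n * N)) (S - (\<Sum>i<n * N. sc (l i) (f i))) \<in> W" by (rule hv.subspace_scale[OF subW])
          moreover have "sc (1 / l (n * N)) (S - (\<Sum>i<n * N. sc (l i) (f i))) = y"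
            unfolding S_def using ln0 by simp
          ultimately show False using yW by simp
        qed
        have fJ: "(\<Sum>i<n * N. sc (l i) (f i)) \<in> Hsub n J" using SJ ln unfolding S_def by simp
        define c1 where "c1 = (\<lambda>i::nat. 0::complex)"
        define c2 where "c2 i = (if i < n * N then - l i else 0)" for i
        have zW: "0 \<in> W" using hv.subspace_0[OF subW] .
        have z0: "(0::hvec) \<in> Hsub n J" using hv.subspace_0[OF subJ] .
        have e1: "(\<forall>i. n * N \<le> i \<longrightarrow> c1 i = 0) \<and> (\<lambda>a k. 0 a k - (\<Sum>i<n * N. c1 i * f i a k)) \<in> Hsub n J"
          unfolding c1_def using z0 unfolding zero_hvec by simp
        have e2: "(\<forall>i. n * N \<le> i \<longrightarrow> c2 i = 0) \<and> (\<lambda>a k. 0 a k - (\<Sum>i<n * N. c2 i * f i a k)) \<in> Hsub n J"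
        proof -
          have "(\<Sum>i<n * N. sc (c2 i) (f i)) = (\<Sum>i<n * N. - sc (l i) (f i))"
            by (intro sum.cong refl) (simp add: c2_def)
          also have "\<dots> = - (\<Sum>i<n * N. sc (l i) (f i))" by (rule sum_negf)
          finally have ee: "0 - (\<Sum>i<n * N. sc (c2 i) (f i)) = (\<Sum>i<n * N. sc (l i) (f i))" by simp
          have "(\<lambda>a k. (0::hvec) a k - (\<Sum>i<n * N. c2 i * f i a k)) = 0 - (\<Sum>i<n * N. sc (c2 i) (f i))"
            by (rule qd_form)
          then have "(\<lambda>a k. (0::hvec) a k - (\<Sum>i<n * N. c2 i * f i a k)) \<in> Hsub n J" using ee fJ by simp
          then show ?thesis by (simp add: c2_def)
        qed
        have "c1 = c2" using uq zW e1 e2 by blast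
        then have "\<forall>i<n * N. l i = 0" unfolding c1_def c2_def by (metis neg_equal_0_iff_equal)
        then show "\<forall>i<Suc (n * N). l i = 0" using ln less_Suc_eq by auto
      qed
      note ind = IND[OF indep]
      have "card (g ` {..<Suc (n * N)}) \<le> n * N"
      proof (rule CL)
        show "finite (g ` {..<Suc (n * N)})" by simp
        show "hv.independent (g ` {..<Suc (n * N)})" by (rule ind(2))
        show "g ` {..<Suc (n * N)} \<subseteq> BoxS n N" using gB by blast
        show "\<forall>u\<in>g ` {..<Suc (n * N)}. \<forall>v\<in>g ` {..<Suc (n * N)}. bform n u v = 0"
        proof (intro ballI)
          fix u v assume "u \<in> g ` {..<Suc (n * N)}" "v \<in> g ` {..<Suc (n * N)}"
          then obtain i j where ij: "i < Suc (n * N)" "j < Suc (n * N)" "u = g i" "v = g j" by auto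
          have ty: "bform n w (trc N y) = 0" if w: "w \<in> W" for w
          proof -
            have "bform n w (trc N y) = bform n w (y - (y - trc N y))" by simp
            also have "\<dots> = bform n w y - bform n w (y - trc N y)"
              by (rule bform_minus2) (use y WH[OF ytail] WH[OF w] in auto)
            also have "\<dots> = 0" using y iso w ytail by simp
            finally show ?thesis .
          qed
          show "bform n u v = 0"
          proof (cases "i < n * N")
            case True
            then have uW: "u \<in> W" using gW ij by simp
            show ?thesis
            proof (cases "j < n * N")
              case True then show ?thesis using gW ij iso uW by simp
            next
              case False then have "v = trc N y" using ij unfolding g_def by simp
              then show ?thesis using ty[OF uW] by simp
            qed
          next
            case False
            then have u: "u = trc N y" using ij unfolding g_def by simp
            show ?thesis
            proof (cases "j < n * N")
              case True
              then have vW: "v \<in> W" using gW ij by simp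
              have "bform n u v = - bform n v u" using bform_skew[OF WH[OF vW] gH[of i]] ij by simp
              then show ?thesis using ty[OF vW] u by simp
            next
              case False then have "v = trc N y" using ij unfolding g_def by simp
              then show ?thesis using u bform_self[OF gH[of "n * N"]] unfolding g_def by simp
            qed
          qed
        qed
      qed
      moreover have "card (g ` {..<Suc (n * N)}) = Suc (n * N)" using card_image[OF ind(1)] by simp
      ultimately show False by simp
    qed
  qed
  show ?thesis unfolding Lag_def using sub tm iso co small by blast
qed

definition piT :: "nat \<Rightarrow> int \<Rightarrow> hvec \<Rightarrow> hvec" where
  "piT n J u = (\<lambda>a k. if a < n \<and> vidx n a k \<le> J then 0 else u a k)"

definition DJ :: "nat \<Rightarrow> nat \<Rightarrow> int \<Rightarrow> (nat \<times> int) set" where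
  "DJ n N J = {ak \<in> {..<n} \<times> {- int N..<int N}. (\<lambda>(a, k). vidx n a k) ak \<le> J}"

definition EJ :: "nat \<Rightarrow> nat \<Rightarrow> int \<Rightarrow> hvec set" where
  "EJ n N J = (\<lambda>(a, k). E a k) ` DJ n N J"

lemma EJ_Hsub: "EJ n N J \<subseteq> Hsub n J"
proof
  fix u assume "u \<in> EJ n N J"
  then obtain a k where ak: "a < n" "vidx n a k \<le> J" "u = E a k" unfolding EJ_def DJ_def by auto
  have "in_H n u" using in_H_E[OF ak(1)] ak(3) by simp
  moreover have "\<forall>b<n. \<forall>j. J < vidx n b j \<longrightarrow> u b j = 0" using ak unfolding E_def by auto
  ultimately show "u \<in> Hsub n J" unfolding Hsub_def by simp
qed

lemma EJ_Unt: "EJ n N J \<subseteq> Unt n N"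
  unfolding EJ_def DJ_def Unt_def by auto

lemma EJ_card:
  assumes n: "1 \<le> n" and J: "- (int n * int N) \<le> J" "J \<le> int n * int N"
  shows "card (EJ n N J) = nat (J + int n * int N)"
proof -
  have "inj_on (\<lambda>(a, k). E a k) (DJ n N J)" by (auto simp: inj_on_def dest: E_inj)
  then have "card (EJ n N J) = card (DJ n N J)" unfolding EJ_def by (rule card_image)
  also have "\<dots> = nat (J + int n * int N)" unfolding DJ_def by (rule vidx_count[OF n _ J]) simp
  finally show ?thesis .
qed

lemma diff_piT_Hsub: "in_H n u \<Longrightarrow> u - piT n J u \<in> Hsub n J"
proof -
  assume u: "in_H n u"
  have "in_H n (u - piT n J u)"
  proof -
    obtain M where M: "\<forall>a k. k < M \<longrightarrow> u a k = 0" using u unfolding in_H_def by blast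
    then show ?thesis using u unfolding in_H_def piT_def by auto
  qed
  then show ?thesis unfolding Hsub_def piT_def by auto
qed

lemma diff_piT_span:
  assumes u: "u \<in> BoxS n N"
  shows "u - piT n J u \<in> hv.span (EJ n N J)"
proof -
  have eq: "u - piT n J u = (\<Sum>ak\<in>DJ n N J. sc (u (fst ak) (snd ak)) (E (fst ak) (snd ak)))"
  proof (intro ext)
    fix a k
    have "(\<Sum>ak\<in>DJ n N J. sc (u (fst ak) (snd ak)) (E (fst ak) (snd ak))) a k
       = (\<Sum>ak\<in>DJ n N J. (if ak = (a, k) then u a k else 0))"
      unfolding sum_hvec by (intro sum.cong refl) (auto simp: sc_def E_def)
    also have "\<dots> = (if (a, k) \<in> DJ n N J then u a k else 0)"
    proof -
      have "finite (DJ n N J)" unfolding DJ_def by simp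
      then show ?thesis using sum.delta[of "DJ n N J" "(a, k)" "\<lambda>_. u a k"] by simp
    qed
    also have "\<dots> = (u - piT n J u) a k"
      using u unfolding BoxS_def in_H_def lowb_def DJ_def piT_def by (auto simp: not_less)
    finally show "(u - piT n J u) a k = (\<Sum>ak\<in>DJ n N J. sc (u (fst ak) (snd ak)) (E (fst ak) (snd ak))) a k" by simp
  qed
  show ?thesis unfolding eq EJ_def
    by (intro hv.span_sum hv.span_scale hv.span_base) (auto intro: image_eqI)
qed

lemma grp2: "(w::'a::ab_group_add) - s = (w - (A + B)) + A + (B - s)"
  by (simp add: algebra_simps)

lemma Lag_qd:
  assumes n: "1 \<le> n" and L: "Lag n W" and N0: "\<forall>w\<in>W. lowb (- int N0) w"
    and J: "J \<le> - (int n * int N0)"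
  shows "Hsub n J \<subseteq> W \<and> quot_dim W (Hsub n J) (nat (- J))"
proof -
  note sub = Lag_parts(1)[OF L] and iso = Lag_parts(3)[OF L] and co = Lag_parts(4)[OF L]
  have WH: "\<And>w. w \<in> W \<Longrightarrow> in_H n w" using sub unfolding lin_subspace_def by blast
  have subW: "hv.subspace W" by (rule lin_subspace_hv[OF sub])
  have subJ: "hv.subspace (Hsub n J)" by (rule Hsub_subspace)
  define N where "N = nat (- J)"
  have N0le: "int N0 \<le> int n * int N0" using mult_right_mono[of 1 "int n" "int N0"] n by simp
  have J0: "J \<le> 0" using J N0le by simp
  have NJ: "int N = - J" unfolding N_def using J0 by simp
  have N0N: "int N0 \<le> int N" using NJ J N0le by simp
  have NnN: "int N \<le> int n * int N" using mult_right_mono[of 1 "int n" "int N"] n by simp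
  have JnN: "- (int n * int N) \<le> J" using NJ NnN by simp
  have small: "\<forall>w\<in>W. lowb (- int N) w" using N0 N0N by (auto intro: lowb_mono)
  have big: "\<forall>v. in_H n v \<and> lowb (int N) v \<longrightarrow> v \<in> W"
  proof (intro allI impI)
    fix v assume v: "in_H n v \<and> lowb (int N) v"
    have "\<forall>u\<in>W. bform n u v = 0" using small v by (auto intro: bform_low)
    then show "v \<in> W" using co v by blast
  qed
  have HJW: "Hsub n J \<subseteq> W"
  proof
    fix v assume "v \<in> Hsub n J"
    then have "v \<in> Hsub n (- (int n * int N0))" using Hsub_mono[OF J] by blast
    then have v: "in_H n v" "lowb (int N0) v" using Hsub_mult[OF n] by auto
    have "\<forall>u\<in>W. bform n u v = 0" using N0 v by (auto intro: bform_low)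
    then show "v \<in> W" using co v by blast
  qed
  define S where "S = W \<inter> BoxS n N"
  have EJS: "EJ n N J \<subseteq> S" unfolding S_def using EJ_Hsub HJW EJ_Unt Un_Box by blast
  have iEJ: "hv.independent (EJ n N J)" by (rule hv.independent_mono[OF Un_indep EJ_Unt])
  obtain B where B: "EJ n N J \<subseteq> B" "B \<subseteq> S" "hv.independent B" "S \<subseteq> hv.span B"
    by (rule hv.maximal_independent_subset_extend[OF EJS iEJ])
  have BB: "B \<subseteq> BoxS n N" using B(2) unfolding S_def by blast
  have BW: "B \<subseteq> W" using B(2) unfolding S_def by blast
  have fB: "finite B" using hv.independent_span_bound[OF Un_finite B(3)] BB Box_span by blast
  have c1: "card B \<le> n * N" by (rule CL[OF fB B(3) BB]) (use iso BW in blast)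
  have c2: "n * N \<le> card B" by (rule LB[OF sub big small co fB B(3)]) (use B S_def in auto)
  have fEJ: "finite (EJ n N J)" unfolding EJ_def DJ_def by simp
  have cEJ: "card (EJ n N J) = nat (J + int n * int N)"
  proof (rule EJ_card[OF n JnN])
    have "0 \<le> int n * int N" by simp
    then show "J \<le> int n * int N" using J0 by linarith
  qed
  define R where "R = B - EJ n N J"
  define d where "d = nat (- J)"
  have fR: "finite R" unfolding R_def using fB by simp
  have cR: "card R = d"
  proof -
    have "card R = card B - card (EJ n N J)" unfolding R_def by (rule card_Diff_subset[OF fEJ B(1)])
    also have "\<dots> = n * N - nat (J + int n * int N)" using c1 c2 cEJ by simp
    also have "\<dots> = d"
    proof -
      have b: "nat (J + int n * int N) \<le> n * N" using J0 JnN by (simp add: nat_le_iff)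
      have "int (n * N - nat (J + int n * int N)) = int (n * N) - int (nat (J + int n * int N))"
        using b by (rule of_nat_diff)
      also have "\<dots> = - J" using JnN by simp
      finally have e: "int (n * N - nat (J + int n * int N)) = - J" .
      show ?thesis unfolding d_def using e by (metis nat_int)
    qed
    finally show ?thesis .
  qed
  obtain r where r: "bij_betw r {..<d} R"
    using ex_bij_betw_nat_finite[OF fR] cR by (auto simp: atLeast0LessThan)
  have rR: "\<And>i. i < d \<Longrightarrow> r i \<in> R" using r unfolding bij_betw_def by auto
  have rB: "\<And>i. i < d \<Longrightarrow> r i \<in> BoxS n N" using rR BB unfolding R_def by blast
  have rW: "\<And>i. i < d \<Longrightarrow> r i \<in> W" using rR BW unfolding R_def by blast
  have rH: "\<And>i. i < d \<Longrightarrow> in_H n (r i)" using rW WH by blast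
  define f where "f i = piT n J (r i)" for i
  have dJ: "\<And>i. i < d \<Longrightarrow> r i - f i \<in> Hsub n J" unfolding f_def using diff_piT_Hsub rH by blast
  have fW: "\<And>i. i < d \<Longrightarrow> f i \<in> W"
  proof -
    fix i assume i: "i < d"
    have "r i - (r i - f i) \<in> W" using hv.subspace_diff[OF subW rW[OF i]] HJW dJ[OF i] by blast
    then show "f i \<in> W" by simp
  qed
  have qd: "quot_dim W (Hsub n J) d"
    unfolding quot_dim_def
  proof (intro exI[of _ f] conjI ballI allI impI)
    fix i assume "i < d" then show "f i \<in> W" by (rule fW)
  next
    fix w assume w: "w \<in> W"
    note tp = trc_props[OF WH[OF w] small[rule_format, OF w]]
    have tailW: "w - trc N w \<in> W" using big tp(2,3) by blast
    have trW: "trc N w \<in> W" using hv.subspace_diff[OF subW w tailW] by simp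
    have "trc N w \<in> hv.span B" using B(4) trW tp(1) unfolding S_def by blast
    then obtain c where c: "trc N w = (\<Sum>x\<in>B. sc (c x) x)" using hv.span_finite[OF fB] by auto
    have Bsplit: "B = EJ n N J \<union> R" unfolding R_def using B(1) by blast
    have disj: "EJ n N J \<inter> R = {}" unfolding R_def by blast
    have tw: "trc N w = (\<Sum>x\<in>EJ n N J. sc (c x) x) + (\<Sum>i<d. sc (c (r i)) (r i))"
    proof -
      have "(\<Sum>x\<in>B. sc (c x) x) = (\<Sum>x\<in>EJ n N J. sc (c x) x) + (\<Sum>x\<in>R. sc (c x) x)"
        unfolding Bsplit by (rule sum.union_disjoint[OF fEJ fR disj])
      moreover have "(\<Sum>x\<in>R. sc (c x) x) = (\<Sum>i<d. sc (c (r i)) (r i))"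
        using sum.reindex_bij_betw[OF r, of "\<lambda>x. sc (c x) x"] by simp
      ultimately show ?thesis using c by simp
    qed
    define cc where "cc i = (if i < d then c (r i) else 0)" for i
    have ex_mem: "w - (\<Sum>i<d. sc (cc i) (f i)) \<in> Hsub n J"
    proof -
      have e1: "(\<Sum>i<d. sc (cc i) (f i)) = (\<Sum>i<d. sc (c (r i)) (f i))"
        unfolding cc_def by (intro sum.cong refl) auto
      have e2: "(\<Sum>i<d. sc (c (r i)) (r i - f i)) = (\<Sum>i<d. sc (c (r i)) (r i)) - (\<Sum>i<d. sc (c (r i)) (f i))"
        by (simp only: hv.scale_right_diff_distrib sum_subtractf)
      have "w - (\<Sum>i<d. sc (cc i) (f i))
          = (w - trc N w) + (\<Sum>x\<in>EJ n N J. sc (c x) x) + (\<Sum>i<d. sc (c (r i)) (r i - f i))"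
        unfolding e1 e2 tw by (rule grp2)
      also have "\<dots> \<in> Hsub n J"
      proof (intro hv.subspace_add[OF subJ])
        show "w - trc N w \<in> Hsub n J"
          using Hsub_mono[OF JnN] Hsub_mult[OF n, of _ "int N"] tp(2,3) by blast
        show "(\<Sum>x\<in>EJ n N J. sc (c x) x) \<in> Hsub n J"
          using EJ_Hsub by (intro hv.subspace_sum[OF subJ] hv.subspace_scale[OF subJ]) auto
        show "(\<Sum>i<d. sc (c (r i)) (r i - f i)) \<in> Hsub n J"
          using dJ by (intro hv.subspace_sum[OF subJ] hv.subspace_scale[OF subJ]) auto
      qed
      finally show ?thesis .
    qed
    show "\<exists>!c. (\<forall>i. d \<le> i \<longrightarrow> c i = 0) \<and> (\<lambda>a k. w a k - (\<Sum>i<d. c i * f i a k)) \<in> Hsub n J"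
    proof (rule ex1I[of _ cc])
      show "(\<forall>i. d \<le> i \<longrightarrow> cc i = 0) \<and> (\<lambda>a k. w a k - (\<Sum>i<d. cc i * f i a k)) \<in> Hsub n J"
        unfolding qd_form using ex_mem by (simp add: cc_def)
    next
      fix c2 assume h2: "(\<forall>i. d \<le> i \<longrightarrow> c2 i = 0) \<and> (\<lambda>a k. w a k - (\<Sum>i<d. c2 i * f i a k)) \<in> Hsub n J"
      then have m2: "w - (\<Sum>i<d. sc (c2 i) (f i)) \<in> Hsub n J" unfolding qd_form by simp
      define dl where "dl i = cc i - c2 i" for i
      define D where "D = (\<Sum>i<d. sc (dl i) (f i))"
      have "(w - (\<Sum>i<d. sc (c2 i) (f i))) - (w - (\<Sum>i<d. sc (cc i) (f i))) = D"
        unfolding D_def dl_def by (simp add: hv.scale_left_diff_distrib sum_subtractf)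
      then have DJ': "D \<in> Hsub n J" using hv.subspace_diff[OF subJ m2 ex_mem] by simp
      have D0: "D = 0"
      proof (intro ext)
        fix a k
        show "D a k = 0 a k"
        proof (cases "a < n \<and> vidx n a k \<le> J")
          case True
          have "D a k = (\<Sum>i<d. dl i * f i a k)" unfolding D_def sum_hvec by (simp add: sc_def)
          also have "\<dots> = 0" using True unfolding f_def piT_def by simp
          finally show ?thesis by simp
        next
          case False
          have h1: "\<forall>a\<ge>n. \<forall>k. D a k = 0" "\<forall>a<n. \<forall>k. J < vidx n a k \<longrightarrow> D a k = 0"
            using DJ' unfolding Hsub_def in_H_def by auto
          show ?thesis using False h1 by (cases "a < n") (auto simp: not_le)
        qed
      qed
      have "(\<Sum>i<d. sc (dl i) (r i)) = (\<Sum>i<d. sc (dl i) (r i - f i)) + D"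
        unfolding D_def by (simp add: hv.scale_right_diff_distrib sum_subtractf)
      then have "(\<Sum>i<d. sc (dl i) (r i)) = (\<Sum>i<d. sc (dl i) (r i - f i))" using D0 by simp
      also have "\<dots> \<in> hv.span (EJ n N J)"
        unfolding f_def using diff_piT_span rB by (intro hv.span_sum hv.span_scale) auto
      finally obtain mu where mu: "(\<Sum>i<d. sc (dl i) (r i)) = (\<Sum>x\<in>EJ n N J. sc (mu x) x)"
        using hv.span_finite[OF fEJ] by auto
      define ri where "ri = the_inv_into {..<d} r"
      have rinv: "\<And>i. i < d \<Longrightarrow> ri (r i) = i" unfolding ri_def
        using the_inv_into_f_f[OF bij_betw_imp_inj_on[OF r]] by simp
      define nu where "nu x = (if x \<in> R then dl (ri x) else - mu x)" for x
      have "(\<Sum>x\<in>B. sc (nu x) x) = (\<Sum>x\<in>EJ n N J. sc (nu x) x) + (\<Sum>x\<in>R. sc (nu x) x)"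
        unfolding Bsplit by (rule sum.union_disjoint[OF fEJ fR disj])
      also have "(\<Sum>x\<in>EJ n N J. sc (nu x) x) = - (\<Sum>x\<in>EJ n N J. sc (mu x) x)"
        unfolding sum_negf[symmetric] nu_def using disj by (intro sum.cong refl) auto
      also have "(\<Sum>x\<in>R. sc (nu x) x) = (\<Sum>i<d. sc (nu (r i)) (r i))"
        using sum.reindex_bij_betw[OF r, of "\<lambda>x. sc (nu x) x"] by simp
      also have "\<dots> = (\<Sum>i<d. sc (dl i) (r i))"
        unfolding nu_def using rR rinv by (intro sum.cong refl) auto
      finally have "(\<Sum>x\<in>B. sc (nu x) x) = 0" using mu by (simp add: zero_hvec)
      then have "\<forall>x\<in>B. nu x = 0" using B(3) hv.dependent_finite[OF fB] by blast
      then have "\<forall>i<d. dl i = 0" using rR rinv unfolding nu_def R_def by (metis Diff_iff)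
      then show "c2 = cc" using h2 unfolding dl_def cc_def by (auto simp: fun_eq_iff)
    qed
  qed
  show ?thesis using HJW qd unfolding d_def by blast
qed

lemma Lag_gr2:
  assumes n: "1 \<le> n" and L: "Lag n W"
  shows "W \<in> gr2 n"
proof -
  note sub = Lag_parts(1)[OF L] and tm = Lag_parts(2)[OF L] and iso = Lag_parts(3)[OF L]
  obtain N1 where N1: "\<forall>w\<in>W. lowb (- N1) w" using Lag_parts(5)[OF L] by blast
  define N0 where "N0 = nat N1"
  have N0: "\<forall>w\<in>W. lowb (- int N0) w" using N1 unfolding N0_def by (auto intro: lowb_mono)
  define J0 where "J0 = - (int n * int N0)"
  have J0le: "J0 \<le> 0" unfolding J0_def by simp
  have "\<forall>J\<le>J0. Hsub n J \<subseteq> W \<and> quot_dim W (Hsub n J) (nat (- J))"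
    unfolding J0_def using Lag_qd[OF n L N0] by blast
  then have "W \<in> Gr0 n" unfolding Gr0_def using sub J0le by blast
  then show ?thesis unfolding gr2_def gr0_def Gr2_def using tm iso by blast
qed

theorem theorem2:
  fixes n :: nat and W :: "hvec set"
  assumes "1 \<le> n"
  shows "W \<in> gr2 n \<longleftrightarrow> (\<exists>g \<in> GL2 n. W = act n g ` Hsub n 0)"
proof
  assume "W \<in> gr2 n"
  then show "\<exists>g \<in> GL2 n. W = act n g ` Hsub n 0" using Lag_orbit gr2_Lag[OF assms] by blast
next
  assume "\<exists>g \<in> GL2 n. W = act n g ` Hsub n 0"
  then obtain g where g: "g \<in> GL2 n" "W = act n g ` Hsub n 0" by blast
  have "Lag n W" unfolding g(2) by (rule Lag_act[OF Lag_H0 g(1)])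
  then show "W \<in> gr2 n" by (rule Lag_gr2[OF assms])
qed


end
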